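(* For every $n\ge 1$, the number of tree-like tableaux of size $n$ having no occupied corner equals $$a(n)=\sum_{k=\lceil (n-1)/2\rceil}^{n}\binom{k+1}{n-k}(-1)^{n-k}\,k!.$$
   Context: A tree-like tableau of size $n$ is a Ferrers diagram (left-justified rows of cells, with weakly decreasing row lengths from top to bottom, in English convention) in which each cell is either empty or pointed, with exactly $n$ pointed cells, such that: (1) the top-left cell is pointed (the root); (2) every pointed cell other than the root has either a pointed cell to its left in the same row or a pointed cell above it in the same column, but not both; (3) every row and every column contains a pointed cell. A corner is a cell with no cell below it and no cell to its right; an occupied corner is a pointed corner. *)

theory Defs
  imports Complex_Main
begin

text \<open>Cells are pairs (i,j): row i (counted from the top, starting at 0) and
column j (counted from the left, starting at 0), English convention.\<close>

definition ferrers :: "(nat \<times> nat) set \<Rightarrow> bool" where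
  "ferrers D \<longleftrightarrow> finite D \<and> D \<noteq> {} \<and>
     (\<forall>i j i' j'. (i, j) \<in> D \<longrightarrow> i' \<le> i \<longrightarrow> j' \<le> j \<longrightarrow> (i', j') \<in> D)"

definition tree_like_tableau :: "(nat \<times> nat) set \<Rightarrow> (nat \<times> nat) set \<Rightarrow> bool" where
  "tree_like_tableau D P \<longleftrightarrow> ferrers D \<and> P \<subseteq> D \<and>
     (0, 0) \<in> P \<and>
     (\<forall>i j. (i, j) \<in> P \<longrightarrow> (i, j) \<noteq> (0, 0) \<longrightarrow>
        ((\<exists>j'<j. (i, j') \<in> P) \<noteq> (\<exists>i'<i. (i', j) \<in> P))) \<and>
     (\<forall>i j. (i, j) \<in> D \<longrightarrow> (\<exists>j'. (i, j') \<in> P) \<and> (\<exists>i'. (i', j) \<in> P))"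

definition is_corner :: "(nat \<times> nat) set \<Rightarrow> nat \<times> nat \<Rightarrow> bool" where
  "is_corner D c \<longleftrightarrow> c \<in> D \<and> (fst c + 1, snd c) \<notin> D \<and> (fst c, snd c + 1) \<notin> D"

definition has_occupied_corner :: "(nat \<times> nat) set \<Rightarrow> (nat \<times> nat) set \<Rightarrow> bool" where
  "has_occupied_corner D P \<longleftrightarrow> (\<exists>c \<in> P. is_corner D c)"

definition tlt_no_occ_corner :: "nat \<Rightarrow> ((nat \<times> nat) set \<times> (nat \<times> nat) set) set" where
  "tlt_no_occ_corner n = {(D, P). tree_like_tableau D P \<and> card P = n \<and> \<not> has_occupied_corner D P}"

end

theory Submission
  imports Defs
begin


definition tlts :: "nat \<Rightarrow> ((nat \<times> nat) set \<times> (nat \<times> nat) set) set" where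
  "tlts n = {(D, P). tree_like_tableau D P \<and> card P = n}"

lemma ferrers_down: "ferrers D \<Longrightarrow> (i, j) \<in> D \<Longrightarrow> i' \<le> i \<Longrightarrow> j' \<le> j \<Longrightarrow> (i', j') \<in> D"
  unfolding ferrers_def by blast

lemma ferrers_00: "ferrers D \<Longrightarrow> (0, 0) \<in> D"
proof -
  assume F: "ferrers D"
  then obtain c where "c \<in> D" unfolding ferrers_def by blast
  then obtain i j where "(i, j) \<in> D" by (cases c) auto
  then show ?thesis using ferrers_down[OF F] by blast
qed

lemma tlt_ferrers: "tree_like_tableau D P \<Longrightarrow> ferrers D"
  and tlt_sub: "tree_like_tableau D P \<Longrightarrow> P \<subseteq> D"
  and tlt_root: "tree_like_tableau D P \<Longrightarrow> (0,0) \<in> P"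
  and tlt_pt: "tree_like_tableau D P \<Longrightarrow> (i, j) \<in> P \<Longrightarrow> (i, j) \<noteq> (0, 0) \<Longrightarrow>
        ((\<exists>j'<j. (i, j') \<in> P) \<noteq> (\<exists>i'<i. (i', j) \<in> P))"
  and tlt_row: "tree_like_tableau D P \<Longrightarrow> (i, j) \<in> D \<Longrightarrow> \<exists>j'. (i, j') \<in> P"
  and tlt_col: "tree_like_tableau D P \<Longrightarrow> (i, j) \<in> D \<Longrightarrow> \<exists>i'. (i', j) \<in> P"
  unfolding tree_like_tableau_def by blast+

lemma tlt_finD: "tree_like_tableau D P \<Longrightarrow> finite D"
  using tlt_ferrers unfolding ferrers_def by simp

lemma tlt_finP: "tree_like_tableau D P \<Longrightarrow> finite P"
  using tlt_finD tlt_sub by (rule finite_subset[rotated])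

lemma tlt_bound_row:
  assumes T: "tree_like_tableau D P" and c: "(i, j) \<in> D"
  shows "i < card P"
proof -
  have "{0..i} \<subseteq> fst ` P"
  proof
    fix i' assume "i' \<in> {0..i}"
    then have "(i', 0) \<in> D" using ferrers_down[OF tlt_ferrers[OF T] c, of i' 0] by simp
    then obtain j' where "(i', j') \<in> P" using tlt_row[OF T] by blast
    then show "i' \<in> fst ` P" by (rule rev_image_eqI) simp
  qed
  then have "card {0..i} \<le> card (fst ` P)"
    by (rule card_mono[OF finite_imageI[OF tlt_finP[OF T]]])
  also have "\<dots> \<le> card P" using card_image_le[OF tlt_finP[OF T]] .
  finally show ?thesis by simp
qed

lemma tlt_bound_col:
  assumes T: "tree_like_tableau D P" and c: "(i, j) \<in> D"
  shows "j < card P"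
proof -
  have "{0..j} \<subseteq> snd ` P"
  proof
    fix j' assume "j' \<in> {0..j}"
    then have "(0, j') \<in> D" using ferrers_down[OF tlt_ferrers[OF T] c, of 0 j'] by simp
    then obtain i' where "(i', j') \<in> P" using tlt_col[OF T] by blast
    then show "j' \<in> snd ` P" by (rule rev_image_eqI) simp
  qed
  then have "card {0..j} \<le> card (snd ` P)"
    by (rule card_mono[OF finite_imageI[OF tlt_finP[OF T]]])
  also have "\<dots> \<le> card P" using card_image_le[OF tlt_finP[OF T]] .
  finally show ?thesis by simp
qed

lemma tlt_box: "tree_like_tableau D P \<Longrightarrow> D \<subseteq> {..<card P} \<times> {..<card P}"
proof
  fix c assume T: "tree_like_tableau D P" and "c \<in> D"
  then obtain i j where "c = (i, j)" "(i,j) \<in> D" by (cases c) auto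
  then show "c \<in> {..<card P} \<times> {..<card P}" using tlt_bound_row[OF T] tlt_bound_col[OF T] by auto
qed

lemma finite_tlts: "finite (tlts n)"
proof -
  have "tlts n \<subseteq> Pow ({..<n} \<times> {..<n}) \<times> Pow ({..<n} \<times> {..<n})"
  proof
    fix x assume "x \<in> tlts n"
    then obtain D P where x: "x = (D, P)" and T: "tree_like_tableau D P" and n: "card P = n"
      unfolding tlts_def by auto
    have "D \<subseteq> {..<n} \<times> {..<n}" using tlt_box[OF T] n by simp
    moreover have "P \<subseteq> D" using tlt_sub[OF T] .
    ultimately show "x \<in> Pow ({..<n} \<times> {..<n}) \<times> Pow ({..<n} \<times> {..<n})" using x by auto
  qed
  then show ?thesis by (rule finite_subset) auto
qed


definition rowsD :: "(nat \<times> nat) set \<Rightarrow> nat set" where "rowsD D = {i. (i, 0) \<in> D}"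
definition colsD :: "(nat \<times> nat) set \<Rightarrow> nat set" where "colsD D = {j. (0, j) \<in> D}"

lemma rowsD_fin: "tree_like_tableau D P \<Longrightarrow> finite (rowsD D)"
proof -
  assume T: "tree_like_tableau D P"
  have "rowsD D \<subseteq> fst ` D" unfolding rowsD_def by (force)
  then show ?thesis using finite_imageI[OF tlt_finD[OF T]] by (rule finite_subset)
qed

lemma colsD_fin: "tree_like_tableau D P \<Longrightarrow> finite (colsD D)"
proof -
  assume T: "tree_like_tableau D P"
  have "colsD D \<subseteq> snd ` D" unfolding colsD_def by (force)
  then show ?thesis using finite_imageI[OF tlt_finD[OF T]] by (rule finite_subset)
qed

lemma rows_cols_card:
  assumes T: "tree_like_tableau D P"
  shows "card (rowsD D) + card (colsD D) = card P + 1"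
proof -
  define U where "U = {p \<in> P. fst p > 0 \<and> \<not> (\<exists>j'<snd p. (fst p, j') \<in> P)}"
  define L where "L = {p \<in> P. snd p > 0 \<and> \<not> (\<exists>i'<fst p. (i', snd p) \<in> P)}"
  have finP: "finite P" using tlt_finP[OF T] .
  have PU: "P = insert (0,0) (U \<union> L)"
  proof (intro equalityI subsetI)
    fix p assume p: "p \<in> P"
    obtain i j where pij: "p = (i, j)" by (cases p)
    show "p \<in> insert (0,0) (U \<union> L)"
    proof (cases "p = (0,0)")
      case False
      then have x: "(\<exists>j'<j. (i, j') \<in> P) \<noteq> (\<exists>i'<i. (i', j) \<in> P)"
        using tlt_pt[OF T] p pij by blast
      show ?thesis
      proof (cases "\<exists>j'<j. (i, j') \<in> P")
        case True
        then have "j > 0" by auto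
        then show ?thesis using x True p pij unfolding L_def by auto
      next
        case False
        then have "\<exists>i'<i. (i', j) \<in> P" using x by blast
        then have "i > 0" by auto
        then show ?thesis using False p pij unfolding U_def by auto
      qed
    qed simp
  next
    fix p assume "p \<in> insert (0,0) (U \<union> L)"
    then show "p \<in> P" using tlt_root[OF T] unfolding U_def L_def by auto
  qed
  have UL: "U \<inter> L = {}"
  proof (rule ccontr)
    assume "U \<inter> L \<noteq> {}"
    then obtain i j where "(i,j) \<in> U" "(i,j) \<in> L" by auto
    then have "(i,j) \<in> P" "(i,j) \<noteq> (0,0)" "\<not> (\<exists>j'<j. (i, j') \<in> P)" "\<not> (\<exists>i'<i. (i', j) \<in> P)"
      unfolding U_def L_def by auto
    then show False using tlt_pt[OF T] by blast
  qed
  have z: "(0,0) \<notin> U \<union> L" unfolding U_def L_def by auto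
  have fU: "finite U" "finite L" using finP unfolding U_def L_def by auto
  have cP: "card P = card U + card L + 1"
    using PU UL z fU by (simp add: card_Un_disjoint)
  have cU: "bij_betw fst U (rowsD D - {0})"
    unfolding bij_betw_def
  proof
    show "inj_on fst U"
    proof (rule inj_onI)
      fix p q assume p: "p \<in> U" and q: "q \<in> U" and e: "fst p = fst q"
      obtain i j where pij: "p = (i,j)" by (cases p)
      obtain j2 where qij: "q = (i,j2)" using e pij by (cases q) auto
      have "\<not> j < j2" using q p unfolding U_def pij qij by auto
      moreover have "\<not> j2 < j" using q p unfolding U_def pij qij by auto
      ultimately show "p = q" using pij qij by simp
    qed
    show "fst ` U = rowsD D - {0}"
    proof (intro equalityI subsetI)
      fix i assume "i \<in> fst ` U"
      then obtain j where "(i,j) \<in> U" by auto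
      then have "(i,j) \<in> D" "i > 0" using tlt_sub[OF T] unfolding U_def by auto
      then show "i \<in> rowsD D - {0}" unfolding rowsD_def
        using ferrers_down[OF tlt_ferrers[OF T], of i j i 0] by auto
    next
      fix i assume i: "i \<in> rowsD D - {0}"
      then obtain j0 where "(i, j0) \<in> P" using tlt_row[OF T] unfolding rowsD_def by blast
      define j where "j = (LEAST j. (i, j) \<in> P)"
      have "(i, j) \<in> P" unfolding j_def by (rule LeastI) fact
      moreover have "\<not> (\<exists>j'<j. (i, j') \<in> P)" unfolding j_def using not_less_Least by blast
      ultimately have "(i,j) \<in> U" using i unfolding U_def by auto
      then show "i \<in> fst ` U" by (rule rev_image_eqI) simp
    qed
  qed
  have cL: "bij_betw snd L (colsD D - {0})"
    unfolding bij_betw_def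
  proof
    show "inj_on snd L"
    proof (rule inj_onI)
      fix p q assume p: "p \<in> L" and q: "q \<in> L" and e: "snd p = snd q"
      obtain i j where pij: "p = (i,j)" by (cases p)
      obtain i2 where qij: "q = (i2,j)" using e pij by (cases q) auto
      have "\<not> i < i2" using q p unfolding L_def pij qij by auto
      moreover have "\<not> i2 < i" using q p unfolding L_def pij qij by auto
      ultimately show "p = q" using pij qij by simp
    qed
    show "snd ` L = colsD D - {0}"
    proof (intro equalityI subsetI)
      fix j assume "j \<in> snd ` L"
      then obtain i where "(i,j) \<in> L" by auto
      then have "(i,j) \<in> D" "j > 0" using tlt_sub[OF T] unfolding L_def by auto
      then show "j \<in> colsD D - {0}" unfolding colsD_def
        using ferrers_down[OF tlt_ferrers[OF T], of i j 0 j] by auto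
    next
      fix j assume j: "j \<in> colsD D - {0}"
      then obtain i0 where "(i0, j) \<in> P" using tlt_col[OF T] unfolding colsD_def by blast
      define i where "i = (LEAST i. (i, j) \<in> P)"
      have "(i, j) \<in> P" unfolding i_def by (rule LeastI) fact
      moreover have "\<not> (\<exists>i'<i. (i', j) \<in> P)" unfolding i_def using not_less_Least by blast
      ultimately have "(i,j) \<in> L" using j unfolding L_def by auto
      then show "j \<in> snd ` L" by (rule rev_image_eqI) simp
    qed
  qed
  have r0: "0 \<in> rowsD D" "0 \<in> colsD D"
    unfolding rowsD_def colsD_def using ferrers_00[OF tlt_ferrers[OF T]] by auto
  have "card U = card (rowsD D) - 1" using bij_betw_same_card[OF cU] r0 rowsD_fin[OF T] by simp
  moreover have "card L = card (colsD D) - 1" using bij_betw_same_card[OF cL] r0 colsD_fin[OF T] by simp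
  moreover have "card (rowsD D) \<ge> 1" "card (colsD D) \<ge> 1"
    using r0 rowsD_fin[OF T] colsD_fin[OF T] by (auto simp: Suc_le_eq card_gt_0_iff)
  ultimately show ?thesis using cP by linarith
qed


lemma ferrersI:
  assumes "finite D" "(0,0) \<in> D" "\<And>i j i' j'. (i,j) \<in> D \<Longrightarrow> i' \<le> i \<Longrightarrow> j' \<le> j \<Longrightarrow> (i',j') \<in> D"
  shows "ferrers D"
  unfolding ferrers_def using assms by blast

lemma tltI:
  assumes "ferrers D" "P \<subseteq> D" "(0,0) \<in> P"
    "\<And>i j. (i,j) \<in> P \<Longrightarrow> (i,j) \<noteq> (0,0) \<Longrightarrow> (\<exists>j'<j. (i,j') \<in> P) \<noteq> (\<exists>i'<i. (i',j) \<in> P)"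
    "\<And>i j. (i,j) \<in> D \<Longrightarrow> \<exists>j'. (i,j') \<in> P"
    "\<And>i j. (i,j) \<in> D \<Longrightarrow> \<exists>i'. (i',j) \<in> P"
  shows "tree_like_tableau D P"
  unfolding tree_like_tableau_def using assms by blast

lemma down_closed_eq:
  fixes A :: "nat set"
  assumes "finite A" "\<And>x y. x \<in> A \<Longrightarrow> y \<le> x \<Longrightarrow> y \<in> A"
  shows "A = {..<card A}"
proof (cases "A = {}")
  case True then show ?thesis by simp
next
  case False
  define m where "m = Max A"
  have "A = {..m}"
  proof (intro equalityI subsetI)
    fix x assume "x \<in> A" then show "x \<in> {..m}" unfolding m_def using assms(1) by simp
  next
    fix x assume "x \<in> {..m}"
    moreover have "m \<in> A" unfolding m_def using assms(1) False by simp
    ultimately show "x \<in> A" using assms(2) by simp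
  qed
  then show ?thesis by (simp add: lessThan_Suc_atMost[symmetric])
qed

definition rowlen :: "(nat \<times> nat) set \<Rightarrow> nat \<Rightarrow> nat" where
  "rowlen D i = card {j. (i, j) \<in> D}"

lemma ferrers_row:
  assumes F: "ferrers D"
  shows "(i, j) \<in> D \<longleftrightarrow> j < rowlen D i"
proof -
  have fin: "finite {j. (i, j) \<in> D}"
  proof -
    have "{j. (i, j) \<in> D} \<subseteq> snd ` D" by force
    moreover have "finite D" using F unfolding ferrers_def by simp
    ultimately show ?thesis by (meson finite_imageI finite_subset)
  qed
  have "{j. (i, j) \<in> D} = {..<card {j. (i, j) \<in> D}}"
  proof (rule down_closed_eq[OF fin])
    fix x y assume "x \<in> {j. (i, j) \<in> D}" "y \<le> x"
    then show "y \<in> {j. (i, j) \<in> D}" using ferrers_down[OF F, of i x i y] by simp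
  qed
  then show ?thesis unfolding rowlen_def by (metis lessThan_iff mem_Collect_eq)
qed

definition R0 :: "(nat \<times> nat) set \<Rightarrow> nat set" where "R0 P = {j. (0, j) \<in> P}"

lemma R0_fin: "tree_like_tableau D P \<Longrightarrow> finite (R0 P)"
proof -
  assume T: "tree_like_tableau D P"
  have "R0 P \<subseteq> snd ` P" unfolding R0_def by force
  then show ?thesis using finite_imageI[OF tlt_finP[OF T]] by (rule finite_subset)
qed

definition caseA :: "nat \<Rightarrow> ((nat \<times> nat) set \<times> (nat \<times> nat) set) set" where
  "caseA n = {(D, P). (D, P) \<in> tlts n \<and> (1, rowlen D 0 - 1) \<notin> D}"

definition caseB :: "nat \<Rightarrow> ((nat \<times> nat) set \<times> (nat \<times> nat) set) set" where
  "caseB n = {(D, P). (D, P) \<in> tlts n \<and> (1, rowlen D 0 - 1) \<in> D}"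

definition gA :: "(nat \<times> nat) set \<times> (nat \<times> nat) set \<Rightarrow> (nat \<times> nat) set \<times> (nat \<times> nat) set" where
  "gA T = (insert (0, rowlen (fst T) 0) (fst T), insert (0, rowlen (fst T) 0) (snd T))"

definition fA :: "(nat \<times> nat) set \<times> (nat \<times> nat) set \<Rightarrow> (nat \<times> nat) set \<times> (nat \<times> nat) set" where
  "fA T = (fst T - {(0, rowlen (fst T) 0 - 1)}, snd T - {(0, rowlen (fst T) 0 - 1)})"

lemma gA_basic:
  assumes T: "tree_like_tableau D P" and c: "c = rowlen D 0"
  shows "(0,c) \<notin> D" "(0,c) \<notin> P" "c \<ge> 1" "\<And>j. (0,j) \<in> D \<longleftrightarrow> j < c"
proof -
  have F: "ferrers D" using tlt_ferrers[OF T] .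
  show cD: "(0,c) \<notin> D" using ferrers_row[OF F] c by simp
  show "(0,c) \<notin> P" using cD tlt_sub[OF T] by blast
  show "c \<ge> 1" using ferrers_row[OF F, of 0 0] ferrers_00[OF F] c by simp
  show "\<And>j. (0,j) \<in> D \<longleftrightarrow> j < c" using ferrers_row[OF F] c by simp
qed

lemma gA_ferrers:
  assumes T: "tree_like_tableau D P" and c: "c = rowlen D 0"
  shows "ferrers (insert (0,c) D)"
proof (rule ferrersI)
  have F: "ferrers D" using tlt_ferrers[OF T] .
  note rowD = gA_basic(4)[OF T c]
  show "finite (insert (0, c) D)" using tlt_finD[OF T] by simp
  show "(0,0) \<in> insert (0,c) D" using ferrers_00[OF F] by simp
  fix i j i' j' assume a: "(i,j) \<in> insert (0,c) D" "i' \<le> i" "j' \<le> j"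
  show "(i',j') \<in> insert (0,c) D"
  proof (cases "(i,j) = (0,c)")
    case True
    then show ?thesis using a rowD by (cases "j' = c") auto
  next
    case False
    then have "(i,j) \<in> D" using a by auto
    then show ?thesis using ferrers_down[OF F _ a(2) a(3)] by simp
  qed
qed

lemma gA_tlt:
  assumes T: "tree_like_tableau D P" and c: "c = rowlen D 0"
  shows "tree_like_tableau (insert (0,c) D) (insert (0,c) P)"
proof (rule tltI[OF gA_ferrers[OF T c]])
  have F: "ferrers D" using tlt_ferrers[OF T] .
  note rowD = gA_basic(4)[OF T c]
  note c1 = gA_basic(3)[OF T c]
  show "insert (0, c) P \<subseteq> insert (0, c) D" using tlt_sub[OF T] by blast
  show "(0,0) \<in> insert (0,c) P" using tlt_root[OF T] by simp
next
  fix i j assume p: "(i,j) \<in> insert (0,c) P" "(i,j) \<noteq> (0,0)"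
  have F: "ferrers D" using tlt_ferrers[OF T] .
  note rowD = gA_basic(4)[OF T c]
  note c1 = gA_basic(3)[OF T c]
  show "(\<exists>j'<j. (i,j') \<in> insert (0,c) P) \<noteq> (\<exists>i'<i. (i',j) \<in> insert (0,c) P)"
  proof (cases "(i,j) = (0,c)")
    case True
    then show ?thesis using tlt_root[OF T] c1 by (auto intro!: exI[of _ 0])
  next
    case False
    then have pP: "(i,j) \<in> P" using p by auto
    have pD: "(i,j) \<in> D" using tlt_sub[OF T] pP by (rule subsetD)
    have l: "(\<exists>j'<j. (i,j') \<in> insert (0,c) P) = (\<exists>j'<j. (i,j') \<in> P)"
    proof -
      have "\<not> (i = 0 \<and> c < j)"
      proof
        assume a: "i = 0 \<and> c < j"
        then have "(0,j) \<in> D" using pD by simp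
        then show False using rowD[of j] a by simp
      qed
      then show ?thesis by auto
    qed
    have u: "(\<exists>i'<i. (i',j) \<in> insert (0,c) P) = (\<exists>i'<i. (i',j) \<in> P)"
    proof -
      have "\<not> (j = c \<and> 0 < i)"
      proof
        assume a: "j = c \<and> 0 < i"
        then have "(0,c) \<in> D" using ferrers_down[OF F pD, of 0 j] by simp
        then show False using rowD[of c] by simp
      qed
      then show ?thesis by auto
    qed
    show ?thesis unfolding l u using tlt_pt[OF T pP p(2)] .
  qed
next
  fix i j assume "(i,j) \<in> insert (0,c) D"
  then show "\<exists>j'. (i,j') \<in> insert (0,c) P" using tlt_row[OF T] by blast
next
  fix i j assume "(i,j) \<in> insert (0,c) D"
  then show "\<exists>i'. (i',j) \<in> insert (0,c) P" using tlt_col[OF T] by blast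
qed

lemma gA_misc:
  assumes T: "tree_like_tableau D P" and c: "c = rowlen D 0"
  shows "card (insert (0,c) P) = card P + 1"
    and "rowlen (insert (0,c) D) 0 = c + 1"
    and "(1, c) \<notin> insert (0,c) D"
    and "R0 (insert (0,c) P) = insert c (R0 P)" "c \<notin> R0 P"
proof -
  have F: "ferrers D" using tlt_ferrers[OF T] .
  note rowD = gA_basic(4)[OF T c]
  note cP = gA_basic(2)[OF T c]
  note cD = gA_basic(1)[OF T c]
  show "card (insert (0,c) P) = card P + 1" using cP tlt_finP[OF T] by simp
  have "{j. (0,j) \<in> insert (0,c) D} = {..<c+1}" by (auto simp: rowD)
  then show "rowlen (insert (0,c) D) 0 = c + 1" unfolding rowlen_def by simp
  show "(1, c) \<notin> insert (0,c) D" using ferrers_down[OF F, of 1 c 0 c] cD by auto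
  show "R0 (insert (0,c) P) = insert c (R0 P)" unfolding R0_def by auto
  show "c \<notin> R0 P" unfolding R0_def using cP by simp
qed

lemma fA_props:
  assumes T: "tree_like_tableau D P" and n2: "card P \<ge> 2" and A: "(1, rowlen D 0 - 1) \<notin> D"
  defines "c \<equiv> rowlen D 0"
  shows "tree_like_tableau (D - {(0,c-1)}) (P - {(0,c-1)})"
    and "card (P - {(0,c-1)}) = card P - 1"
    and "rowlen (D - {(0,c-1)}) 0 = c - 1"
    and "(0,c-1) \<in> P"
proof -
  have F: "ferrers D" using tlt_ferrers[OF T] .
  have rowD: "\<And>j. (0,j) \<in> D \<longleftrightarrow> j < c" using ferrers_row[OF F] c_def by simp
  have c1: "c \<ge> 1" using ferrers_00[OF F] by (auto simp: rowD)
  have A': "(1, c-1) \<notin> D" using A c_def by simp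
  have notbig: "\<And>i j. (i,j) \<in> D \<Longrightarrow> j \<ge> c - 1 \<Longrightarrow> (i,j) = (0, c-1)"
  proof -
    fix i j assume a: "(i,j) \<in> D" "j \<ge> c - 1"
    show "(i,j) = (0,c-1)"
    proof (cases "i = 0")
      case True then show ?thesis using a by (auto simp: rowD)
    next
      case False then show ?thesis using a ferrers_down[OF F a(1), of 1 "c-1"] A' by auto
    qed
  qed
  have eD: "(0,c-1) \<in> D" using c1 by (simp add: rowD)
  show eP: "(0,c-1) \<in> P"
  proof -
    obtain i' where "(i', c-1) \<in> P" using tlt_col[OF T eD] by blast
    then show ?thesis using notbig tlt_sub[OF T] by blast
  qed
  have c2: "c \<ge> 2"
  proof (rule ccontr)
    assume "\<not> c \<ge> 2"
    then have "c = 1" using c1 by simp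
    then have "D \<subseteq> {(0,0)}" using notbig by fastforce
    then have "P \<subseteq> {(0,0)}" using tlt_sub[OF T] by blast
    then have "card P \<le> card {(0::nat,0::nat)}" by (rule card_mono[rotated]) simp
    then have "card P \<le> 1" by simp
    then show False using n2 by simp
  qed
  have F2: "ferrers (D - {(0,c-1)})"
  proof (rule ferrersI)
    show "finite (D - {(0,c-1)})" using tlt_finD[OF T] by simp
    show "(0,0) \<in> D - {(0,c-1)}" using ferrers_00[OF F] c2 by simp
    fix i j i' j' assume a: "(i,j) \<in> D - {(0,c-1)}" "i' \<le> i" "j' \<le> j"
    have "(i',j') \<in> D" using a ferrers_down[OF F _ a(2) a(3)] by simp
    moreover have "(i',j') \<noteq> (0,c-1)"
    proof
      assume "(i',j') = (0,c-1)"
      then have "j \<ge> c - 1" using a by simp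
      then show False using notbig a by blast
    qed
    ultimately show "(i',j') \<in> D - {(0,c-1)}" by simp
  qed
  show "tree_like_tableau (D - {(0,c-1)}) (P - {(0,c-1)})"
  proof (rule tltI[OF F2])
    show "P - {(0, c - 1)} \<subseteq> D - {(0, c - 1)}" using tlt_sub[OF T] by blast
    show "(0,0) \<in> P - {(0, c - 1)}" using tlt_root[OF T] c2 by simp
  next
    fix i j assume p: "(i,j) \<in> P - {(0,c-1)}" "(i,j) \<noteq> (0,0)"
    then have pP: "(i,j) \<in> P" and pD: "(i,j) \<in> D" using tlt_sub[OF T] by auto
    have l: "(\<exists>j'<j. (i,j') \<in> P - {(0,c-1)}) = (\<exists>j'<j. (i,j') \<in> P)"
    proof -
      have "\<not> (i = 0 \<and> c - 1 < j)" using pD by (auto simp: rowD)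
      then show ?thesis by auto
    qed
    have u: "(\<exists>i'<i. (i',j) \<in> P - {(0,c-1)}) = (\<exists>i'<i. (i',j) \<in> P)"
    proof -
      have "\<not> (j = c - 1 \<and> 0 < i)" using pD notbig by fastforce
      then show ?thesis by auto
    qed
    show "(\<exists>j'<j. (i,j') \<in> P - {(0,c-1)}) \<noteq> (\<exists>i'<i. (i',j) \<in> P - {(0,c-1)})"
      unfolding l u using tlt_pt[OF T pP p(2)] .
  next
    fix i j assume a: "(i,j) \<in> D - {(0,c-1)}"
    show "\<exists>j'. (i,j') \<in> P - {(0,c-1)}"
    proof (cases "i = 0")
      case True then show ?thesis using tlt_root[OF T] c2 by (intro exI[of _ 0]) auto
    next
      case False
      then obtain j' where "(i,j') \<in> P" using tlt_row[OF T] a by blast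
      then show ?thesis using False by blast
    qed
  next
    fix i j assume a: "(i,j) \<in> D - {(0,c-1)}"
    then obtain i' where i': "(i',j) \<in> P" using tlt_col[OF T] by blast
    have "(i',j) \<noteq> (0,c-1)"
    proof
      assume "(i',j) = (0,c-1)"
      then have "j = c - 1" by simp
      then show False using notbig a by blast
    qed
    then show "\<exists>i'. (i',j) \<in> P - {(0,c-1)}" using i' by blast
  qed
  show "card (P - {(0,c-1)}) = card P - 1" using eP tlt_finP[OF T] by simp
  show "rowlen (D - {(0,c-1)}) 0 = c - 1"
  proof -
    have "{j. (0,j) \<in> D - {(0,c-1)}} = {..<c-1}" by (auto simp: rowD)
    then show ?thesis unfolding rowlen_def by simp
  qed
qed


lemma gA_fA:
  assumes "(D,P) \<in> tlts m"
  shows "fA (gA (D,P)) = (D,P)" and "gA (D,P) \<in> caseA (m+1)"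
proof -
  have T: "tree_like_tableau D P" and m: "card P = m" using assms unfolding tlts_def by auto
  define c where "c = rowlen D 0"
  note b = gA_basic[OF T c_def] and mi = gA_misc[OF T c_def]
  have g: "gA (D,P) = (insert (0,c) D, insert (0,c) P)" unfolding gA_def c_def by simp
  show "fA (gA (D,P)) = (D,P)" unfolding g fA_def using mi(2) b(1) b(2) by simp
  show "gA (D,P) \<in> caseA (m+1)" unfolding g caseA_def tlts_def
    using gA_tlt[OF T c_def] mi(1) mi(2) mi(3) m by simp
qed

lemma fA_gA:
  assumes "(D,P) \<in> caseA n" and "n \<ge> 2"
  shows "gA (fA (D,P)) = (D,P)" and "fA (D,P) \<in> tlts (n-1)"
proof -
  have T: "tree_like_tableau D P" and m: "card P = n" and A: "(1, rowlen D 0 - 1) \<notin> D"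
    using assms unfolding caseA_def tlts_def by auto
  define c where "c = rowlen D 0"
  note p = fA_props[OF T _ A]
  have n2: "card P \<ge> 2" using m assms(2) by simp
  have f: "fA (D,P) = (D - {(0,c-1)}, P - {(0,c-1)})" unfolding fA_def c_def by simp
  have c1: "c \<ge> 1" using ferrers_row[OF tlt_ferrers[OF T], of 0 0] ferrers_00[OF tlt_ferrers[OF T]] c_def by simp
  have eD: "(0,c-1) \<in> D" using tlt_sub[OF T] p(4)[OF n2] c_def by auto
  show "gA (fA (D,P)) = (D,P)" unfolding f gA_def using p(3)[OF n2] p(4)[OF n2] eD c_def
    by (auto simp: insert_absorb)
  show "fA (D,P) \<in> tlts (n-1)" unfolding f tlts_def using p(1)[OF n2] p(2)[OF n2] m c_def by simp
qed

lemma R0_gA: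
  assumes "(D,P) \<in> tlts m"
  shows "card (R0 (snd (gA (D,P)))) = card (R0 P) + 1"
proof -
  have T: "tree_like_tableau D P" using assms unfolding tlts_def by auto
  define c where "c = rowlen D 0"
  note mi = gA_misc[OF T c_def]
  have g: "snd (gA (D,P)) = insert (0,c) P" unfolding gA_def c_def by simp
  show ?thesis unfolding g mi(4) using mi(5) R0_fin[OF T] by simp
qed

lemma caseA_sum:
  assumes n: "n \<ge> 2"
  shows "(\<Sum>T\<in>caseA n. (x::nat) ^ card (R0 (snd T))) = x * (\<Sum>T\<in>tlts (n-1). x ^ card (R0 (snd T)))"
proof -
  have n1: "n - 1 + 1 = n" using n by simp
  have bij: "bij_betw gA (tlts (n-1)) (caseA n)"
  proof (rule bij_betw_byWitness[where f'=fA])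
    show "\<forall>a\<in>tlts (n - 1). fA (gA a) = a" using gA_fA(1) by auto
    show "\<forall>a'\<in>caseA n. gA (fA a') = a'" using fA_gA(1) n by auto
    show "gA ` tlts (n - 1) \<subseteq> caseA n" using gA_fA(2)[where m="n-1"] n1 by auto
    show "fA ` caseA n \<subseteq> tlts (n - 1)" using fA_gA(2) n by auto
  qed
  have "(\<Sum>T\<in>caseA n. x ^ card (R0 (snd T))) = (\<Sum>T\<in>tlts (n-1). x ^ card (R0 (snd (gA T))))"
    using sum.reindex_bij_betw[OF bij, symmetric] .
  also have "\<dots> = (\<Sum>T\<in>tlts (n-1). x * x ^ card (R0 (snd T)))"
    by (rule sum.cong) (auto simp: R0_gA)
  finally show ?thesis by (simp add: sum_distrib_left)
qed


definition yB :: "(nat \<times> nat) set \<Rightarrow> nat" where "yB P = (LEAST j. (1, j) \<in> P)"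
definition fBD :: "(nat \<times> nat) set \<Rightarrow> (nat \<times> nat) set" where
  "fBD D = {(i,j). (Suc i, j) \<in> D}"
definition fBP :: "(nat \<times> nat) set \<Rightarrow> nat \<Rightarrow> (nat \<times> nat) set" where
  "fBP P y = {(i,j). (i = 0 \<and> ((0,j) \<in> P \<or> ((1,j) \<in> P \<and> j \<noteq> y))) \<or> (0 < i \<and> (Suc i, j) \<in> P)}"
definition fBK :: "(nat \<times> nat) set \<Rightarrow> nat \<Rightarrow> nat set" where
  "fBK P y = {j. (0,j) \<in> P \<and> y < j}"

lemma caseB_facts:
  assumes "(D,P) \<in> caseB n"
  shows "tree_like_tableau D P" "card P = n" "\<And>j. (1,j) \<in> D \<longleftrightarrow> (0,j) \<in> D"
    "(1, yB P) \<in> P" "(0, yB P) \<in> P" "\<And>j. j < yB P \<Longrightarrow> (1,j) \<notin> P"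
    "\<And>j. (1,j) \<in> P \<Longrightarrow> j \<noteq> yB P \<Longrightarrow> yB P < j \<and> (0,j) \<notin> P"
proof -
  show T: "tree_like_tableau D P" and "card P = n" using assms unfolding caseB_def tlts_def by auto
  have B: "(1, rowlen D 0 - 1) \<in> D" using assms unfolding caseB_def by auto
  have F: "ferrers D" using tlt_ferrers[OF T] .
  show rr: "\<And>j. (1,j) \<in> D \<longleftrightarrow> (0,j) \<in> D"
  proof
    fix j assume "(1,j) \<in> D" then show "(0,j) \<in> D" using ferrers_down[OF F, of 1 j 0 j] by simp
  next
    fix j assume "(0,j) \<in> D"
    then have "j \<le> rowlen D 0 - 1" using ferrers_row[OF F, of 0 j] by simp
    then show "(1,j) \<in> D" using ferrers_down[OF F B, of 1 j] by simp
  qed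
  have "(1,0) \<in> D" using ferrers_down[OF F B, of 1 0] by simp
  then obtain j0 where "(1,j0) \<in> P" using tlt_row[OF T] by blast
  then show y1: "(1, yB P) \<in> P" unfolding yB_def by (rule LeastI)
  show nl: "\<And>j. j < yB P \<Longrightarrow> (1,j) \<notin> P" unfolding yB_def using not_less_Least by blast
  have "(\<exists>j'<yB P. (1, j') \<in> P) \<noteq> (\<exists>i'<1. (i', yB P) \<in> P)" using tlt_pt[OF T y1] by simp
  then show y0: "(0, yB P) \<in> P" using nl by auto
  fix j assume j: "(1,j) \<in> P" "j \<noteq> yB P"
  have "yB P \<le> j" unfolding yB_def using j(1) by (rule Least_le)
  then have yj: "yB P < j" using j(2) by simp
  have "(\<exists>j'<j. (1, j') \<in> P) \<noteq> (\<exists>i'<1. (i', j) \<in> P)" using tlt_pt[OF T j(1)] by simp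
  then have "(0,j) \<notin> P" using yj y1 by auto
  then show "yB P < j \<and> (0,j) \<notin> P" using yj by simp
qed

lemma fB_tlt:
  assumes "(D,P) \<in> caseB n"
  defines "y \<equiv> yB P"
  shows "tree_like_tableau (fBD D) (fBP P y)"
proof -
  note fa = caseB_facts[OF assms(1)]
  have T: "tree_like_tableau D P" by (rule fa(1))
  have F: "ferrers D" using tlt_ferrers[OF T] .
  have y1: "(1,y) \<in> P" and y0: "(0,y) \<in> P" using fa(4) fa(5) y_def by auto
  have oth: "\<And>j. (1,j) \<in> P \<Longrightarrow> j \<noteq> y \<Longrightarrow> y < j \<and> (0,j) \<notin> P" using fa(7) y_def by auto
  have F2: "ferrers (fBD D)"
  proof (rule ferrersI)
    have "fBD D \<subseteq> {..<card P} \<times> {..<card P}"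
    proof
      fix p assume "p \<in> fBD D"
      then obtain i j where p: "p = (i,j)" "(Suc i, j) \<in> D" unfolding fBD_def by auto
      then show "p \<in> {..<card P} \<times> {..<card P}"
        using tlt_bound_row[OF T p(2)] tlt_bound_col[OF T p(2)] by auto
    qed
    then show "finite (fBD D)" by (rule finite_subset) simp
    have "(1,0) \<in> D" using y1 tlt_sub[OF T] ferrers_down[OF F, of 1 y 1 0] by auto
    then show "(0,0) \<in> fBD D" unfolding fBD_def by simp
    fix i j i' j' assume a: "(i,j) \<in> fBD D" "i' \<le> i" "j' \<le> j"
    then show "(i',j') \<in> fBD D" unfolding fBD_def using ferrers_down[OF F, of "Suc i" j "Suc i'" j'] by simp
  qed
  show ?thesis
  proof (rule tltI[OF F2])
    show "fBP P y \<subseteq> fBD D"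
    proof
      fix p assume "p \<in> fBP P y"
      then obtain i j where p: "p = (i,j)" and
        c: "(i = 0 \<and> ((0,j) \<in> P \<or> ((1,j) \<in> P \<and> j \<noteq> y))) \<or> (0 < i \<and> (Suc i, j) \<in> P)"
        unfolding fBP_def by auto
      show "p \<in> fBD D" unfolding p fBD_def using c tlt_sub[OF T] fa(3) by auto
    qed
    show "(0,0) \<in> fBP P y" unfolding fBP_def using tlt_root[OF T] by simp
  next
    fix i j assume p: "(i,j) \<in> fBP P y" "(i,j) \<noteq> (0,0)"
    show "(\<exists>j'<j. (i,j') \<in> fBP P y) \<noteq> (\<exists>i'<i. (i',j) \<in> fBP P y)"
    proof (cases "i = 0")
      case True
      then have "j > 0" using p(2) by simp
      moreover have "(0,0) \<in> fBP P y" unfolding fBP_def using tlt_root[OF T] by simp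
      ultimately show ?thesis using True by auto
    next
      case False
      then have sP: "(Suc i, j) \<in> P" using p(1) unfolding fBP_def by auto
      have L: "(\<exists>j'<j. (i,j') \<in> fBP P y) = (\<exists>j'<j. (Suc i,j') \<in> P)"
        unfolding fBP_def using False by auto
      have U: "(\<exists>i'<i. (i',j) \<in> fBP P y) = (\<exists>i'<Suc i. (i',j) \<in> P)"
      proof
        assume "\<exists>i'<i. (i',j) \<in> fBP P y"
        then obtain i' where i': "i' < i" "(i',j) \<in> fBP P y" by blast
        show "\<exists>i'<Suc i. (i',j) \<in> P"
        proof (cases "i' = 0")
          case True
          then have "(0,j) \<in> P \<or> (1,j) \<in> P" using i'(2) unfolding fBP_def by auto
          then show ?thesis using False by (metis One_nat_def gr0I less_Suc_eq_0_disj zero_less_Suc)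
        next
          case False
          then have "(Suc i', j) \<in> P" using i'(2) unfolding fBP_def by auto
          then show ?thesis using i'(1) by (intro exI[of _ "Suc i'"]) simp
        qed
      next
        assume "\<exists>i'<Suc i. (i',j) \<in> P"
        then obtain i'' where i'': "i'' < Suc i" "(i'',j) \<in> P" by blast
        show "\<exists>i'<i. (i',j) \<in> fBP P y"
        proof (cases "i'' \<le> 1")
          case True
          have "(0,j) \<in> fBP P y"
          proof (cases "i'' = 0")
            case True then show ?thesis using i'' unfolding fBP_def by simp
          next
            case False
            then have "i'' = 1" using \<open>i'' \<le> 1\<close> by simp
            then show ?thesis using i'' y0 unfolding fBP_def by (cases "j = y") auto
          qed
          then show ?thesis using \<open>i \<noteq> 0\<close> by (intro exI[of _ 0]) simp
        next
          case False
          then have "(i'' - 1, j) \<in> fBP P y" using i'' unfolding fBP_def by auto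
          moreover have "i'' - 1 < i" using i'' False by simp
          ultimately show ?thesis by blast
        qed
      qed
      have "(Suc i, j) \<noteq> (0,0)" by simp
      show ?thesis unfolding L U using tlt_pt[OF T sP] by simp
    qed
  next
    fix i j assume a: "(i,j) \<in> fBD D"
    then have "(Suc i, j) \<in> D" unfolding fBD_def by simp
    then obtain j' where j': "(Suc i, j') \<in> P" using tlt_row[OF T] by blast
    show "\<exists>j'. (i,j') \<in> fBP P y"
    proof (cases "i = 0")
      case True
      then show ?thesis using tlt_root[OF T] unfolding fBP_def by (intro exI[of _ 0]) simp
    next
      case False then show ?thesis using j' unfolding fBP_def by (intro exI[of _ j']) simp
    qed
  next
    fix i j assume a: "(i,j) \<in> fBD D"
    then have "(Suc i, j) \<in> D" unfolding fBD_def by simp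
    then obtain i' where i': "(i', j) \<in> P" using tlt_col[OF T] by blast
    show "\<exists>i'. (i',j) \<in> fBP P y"
    proof (cases "i' \<le> 1")
      case True
      have "(0,j) \<in> fBP P y"
      proof (cases "i' = 0")
        case True then show ?thesis using i' unfolding fBP_def by simp
      next
        case False
        then have "i' = 1" using \<open>i' \<le> 1\<close> by simp
        then show ?thesis using i' y0 unfolding fBP_def by (cases "j = y") auto
      qed
      then show ?thesis by blast
    next
      case False
      then have "(i' - 1, j) \<in> fBP P y" using i' unfolding fBP_def by auto
      then show ?thesis by blast
    qed
  qed
qed


lemma fB_card:
  assumes "(D,P) \<in> caseB n"
  defines "y \<equiv> yB P"
  shows "card (fBP P y) = n - 1"
proof -
  note fa = caseB_facts[OF assms(1)]
  have T: "tree_like_tableau D P" by (rule fa(1))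
  have y1: "(1,y) \<in> P" and y0: "(0,y) \<in> P" using fa(4) fa(5) y_def by auto
  have oth: "\<And>j. (1,j) \<in> P \<Longrightarrow> j \<noteq> y \<Longrightarrow> y < j \<and> (0,j) \<notin> P" using fa(7) y_def by auto
  define h where "h = (\<lambda>(i::nat,j::nat). (i - 1, j))"
  have inj: "inj_on h (P - {(1,y)})"
  proof (rule inj_onI)
    fix p q assume p: "p \<in> P - {(1,y)}" and q: "q \<in> P - {(1,y)}" and e: "h p = h q"
    obtain i j where pij: "p = (i,j)" by (cases p)
    obtain i' j' where qij: "q = (i',j')" by (cases q)
    have jj: "j' = j" and ii: "i - 1 = i' - 1" using e unfolding h_def pij qij by auto
    show "p = q"
    proof (rule ccontr)
      assume "p \<noteq> q"
      then have "i \<noteq> i'" using pij qij jj by simp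
      then have "(i = 0 \<and> i' = 1) \<or> (i = 1 \<and> i' = 0)" using ii by auto
      then show False using p q oth unfolding pij qij jj by auto
    qed
  qed
  have img: "h ` (P - {(1,y)}) = fBP P y"
  proof (intro equalityI subsetI)
    fix q assume "q \<in> h ` (P - {(1,y)})"
    then obtain i j where ij: "(i,j) \<in> P" "(i,j) \<noteq> (1,y)" "q = (i - 1, j)" unfolding h_def by auto
    show "q \<in> fBP P y"
    proof (cases "i \<le> 1")
      case True then have "i = 0 \<or> i = 1" by auto
      then show ?thesis using ij unfolding fBP_def by (elim disjE) auto
    next
      case False then show ?thesis using ij unfolding fBP_def by auto
    qed
  next
    fix q assume "q \<in> fBP P y"
    then obtain i j where q: "q = (i,j)" and
      c: "(i = 0 \<and> ((0,j) \<in> P \<or> ((1,j) \<in> P \<and> j \<noteq> y))) \<or> (0 < i \<and> (Suc i, j) \<in> P)"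
      unfolding fBP_def by auto
    show "q \<in> h ` (P - {(1,y)})"
    proof -
      consider "i = 0" "(0,j) \<in> P" | "i = 0" "(1,j) \<in> P" "j \<noteq> y" | "0 < i" "(Suc i, j) \<in> P"
        using c by auto
      then show ?thesis
      proof cases
        case 1 then show ?thesis unfolding q h_def by (intro rev_image_eqI[of "(0,j)"]) auto
      next
        case 2 then show ?thesis unfolding q h_def by (intro rev_image_eqI[of "(1,j)"]) auto
      next
        case 3 then show ?thesis unfolding q h_def by (intro rev_image_eqI[of "(Suc i,j)"]) auto
      qed
    qed
  qed
  have "card (fBP P y) = card (P - {(1,y)})" using card_image[OF inj] img by simp
  also have "\<dots> = n - 1" using y1 fa(2) tlt_finP[OF T] by simp
  finally show ?thesis .
qed

lemma fB_Y:
  assumes "(D,P) \<in> caseB n"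
  defines "y \<equiv> yB P"
  shows "y \<in> R0 (fBP P y)" "fBK P y \<subseteq> {j \<in> R0 (fBP P y). y < j}"
proof -
  note fa = caseB_facts[OF assms(1)]
  have y0: "(0,y) \<in> P" using fa(5) y_def by auto
  show "y \<in> R0 (fBP P y)" unfolding R0_def fBP_def using y0 by simp
  show "fBK P y \<subseteq> {j \<in> R0 (fBP P y). y < j}" unfolding R0_def fBP_def fBK_def by auto
qed

definition gBD :: "(nat \<times> nat) set \<Rightarrow> (nat \<times> nat) set" where
  "gBD D = {(i,j). (i = 0 \<and> (0,j) \<in> D) \<or> (0 < i \<and> (i - 1, j) \<in> D)}"
definition gBP :: "(nat \<times> nat) set \<Rightarrow> nat \<Rightarrow> nat set \<Rightarrow> (nat \<times> nat) set" where
  "gBP P y K = {(i,j). (i = 0 \<and> (0,j) \<in> P \<and> (j \<le> y \<or> j \<in> K)) \<or>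
      (i = 1 \<and> (j = y \<or> ((0,j) \<in> P \<and> y < j \<and> j \<notin> K))) \<or> (2 \<le> i \<and> (i - 1, j) \<in> P)}"


lemma gB_tlt:
  assumes T: "tree_like_tableau D P" and y: "y \<in> R0 P" and K: "K \<subseteq> {j \<in> R0 P. y < j}"
  shows "tree_like_tableau (gBD D) (gBP P y K)"
proof -
  have F: "ferrers D" using tlt_ferrers[OF T] .
  have y0: "(0,y) \<in> P" using y unfolding R0_def by simp
  have Kp: "\<And>j. j \<in> K \<Longrightarrow> (0,j) \<in> P \<and> y < j" using K unfolding R0_def by auto
  have F2: "ferrers (gBD D)"
  proof (rule ferrersI)
    have "gBD D \<subseteq> {..card P} \<times> {..<card P}"
    proof
      fix p assume "p \<in> gBD D"
      then obtain i j where p: "p = (i,j)" and c: "(i = 0 \<and> (0,j) \<in> D) \<or> (0 < i \<and> (i - 1, j) \<in> D)"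
        unfolding gBD_def by auto
      then show "p \<in> {..card P} \<times> {..<card P}"
        using tlt_bound_row[OF T, of "i - 1" j] tlt_bound_col[OF T, of 0 j] tlt_bound_col[OF T, of "i - 1" j]
        by auto
    qed
    then show "finite (gBD D)" by (rule finite_subset) simp
    show "(0,0) \<in> gBD D" unfolding gBD_def using ferrers_00[OF F] by simp
    fix i j i' j' assume a: "(i,j) \<in> gBD D" "i' \<le> i" "j' \<le> j"
    have c: "(i = 0 \<and> (0,j) \<in> D) \<or> (0 < i \<and> (i - 1, j) \<in> D)" using a(1) unfolding gBD_def by simp
    show "(i',j') \<in> gBD D"
    proof (cases "i' = 0")
      case True
      have "(0,j') \<in> D" using c ferrers_down[OF F, of 0 j 0 j'] ferrers_down[OF F, of "i - 1" j 0 j'] a(3)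
        by auto
      then show ?thesis unfolding gBD_def using True by simp
    next
      case False
      then have "0 < i" "(i - 1, j) \<in> D" using c a(2) by auto
      then have "(i' - 1, j') \<in> D" using ferrers_down[OF F, of "i - 1" j "i' - 1" j'] a by simp
      then show ?thesis unfolding gBD_def using False by simp
    qed
  qed
  have inP: "\<And>i j. (i,j) \<in> gBP P y K \<longleftrightarrow> (i = 0 \<and> (0,j) \<in> P \<and> (j \<le> y \<or> j \<in> K)) \<or>
      (i = 1 \<and> (j = y \<or> ((0,j) \<in> P \<and> y < j \<and> j \<notin> K))) \<or> (2 \<le> i \<and> (i - 1, j) \<in> P)"
    unfolding gBP_def by simp
  have row0: "\<And>j. (0,j) \<in> P \<Longrightarrow> (0,j) \<in> gBP P y K \<or> (1,j) \<in> gBP P y K"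
    unfolding inP by auto
  show ?thesis
  proof (rule tltI[OF F2])
    show "gBP P y K \<subseteq> gBD D"
    proof
      fix p assume "p \<in> gBP P y K"
      then obtain i j where p: "p = (i,j)" and c: "(i,j) \<in> gBP P y K" by (cases p) auto
      show "p \<in> gBD D" using c tlt_sub[OF T] y0 unfolding p inP gBD_def by auto
    qed
    show "(0,0) \<in> gBP P y K" unfolding inP using tlt_root[OF T] by simp
  next
    fix i j assume p: "(i,j) \<in> gBP P y K" "(i,j) \<noteq> (0,0)"
    have r00: "(0,0) \<in> gBP P y K" unfolding inP using tlt_root[OF T] by simp
    consider "i = 0" | "i = 1" "j = y" | "i = 1" "j \<noteq> y" | "2 \<le> i" by linarith
    then show "(\<exists>j'<j. (i,j') \<in> gBP P y K) \<noteq> (\<exists>i'<i. (i',j) \<in> gBP P y K)"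
    proof cases
      case 1
      then have "j > 0" using p(2) by simp
      then show ?thesis using 1 r00 by auto
    next
      case 2
      have "\<not> (\<exists>j'<j. (i,j') \<in> gBP P y K)" unfolding inP using 2 by auto
      moreover have "(0,j) \<in> gBP P y K" unfolding inP using 2 y0 by simp
      ultimately show ?thesis using 2 by auto
    next
      case 3
      then have c: "(0,j) \<in> P" "y < j" "j \<notin> K" using p(1) unfolding inP by auto
      have "(1,y) \<in> gBP P y K" unfolding inP by simp
      then have "\<exists>j'<j. (i,j') \<in> gBP P y K" using 3 c by auto
      moreover have "\<not> (\<exists>i'<i. (i',j) \<in> gBP P y K)" unfolding inP using 3 c by auto
      ultimately show ?thesis by auto
    next
      case 4
      then have pP: "(i - 1, j) \<in> P" using p(1) unfolding inP by auto
      have nr: "(i - 1, j) \<noteq> (0,0)" using 4 by simp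
      have L: "(\<exists>j'<j. (i,j') \<in> gBP P y K) = (\<exists>j'<j. (i - 1,j') \<in> P)"
        unfolding inP using 4 by auto
      have U: "(\<exists>i'<i. (i',j) \<in> gBP P y K) = (\<exists>i'<i - 1. (i',j) \<in> P)"
      proof
        assume "\<exists>i'<i. (i',j) \<in> gBP P y K"
        then obtain i'' where i'': "i'' < i" "(i'',j) \<in> gBP P y K" by blast
        consider "i'' = 0" | "i'' = 1" | "2 \<le> i''" by linarith
        then show "\<exists>i'<i - 1. (i',j) \<in> P"
        proof cases
          case 1 then show ?thesis using i'' 4 unfolding inP by (intro exI[of _ 0]) auto
        next
          case 2
          then have "(0,j) \<in> P" using i'' y0 unfolding inP by auto
          then show ?thesis using 4 by (intro exI[of _ 0]) auto
        next
          case 3 then show ?thesis using i'' unfolding inP by (intro exI[of _ "i'' - 1"]) auto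
        qed
      next
        assume "\<exists>i'<i - 1. (i',j) \<in> P"
        then obtain i' where i': "i' < i - 1" "(i',j) \<in> P" by blast
        show "\<exists>i'<i. (i',j) \<in> gBP P y K"
        proof (cases "i' = 0")
          case True
          then have "(0,j) \<in> gBP P y K \<or> (1,j) \<in> gBP P y K" using row0 i' by simp
          moreover have "0 < i" "1 < i" using 4 by auto
          ultimately show ?thesis by blast
        next
          case False
          then have "(i' + 1, j) \<in> gBP P y K" unfolding inP using i' by auto
          then show ?thesis using i' by (intro exI[of _ "i' + 1"]) auto
        qed
      qed
      show ?thesis unfolding L U using tlt_pt[OF T pP nr] .
    qed
  next
    fix i j assume a: "(i,j) \<in> gBD D"
    have c: "(i = 0 \<and> (0,j) \<in> D) \<or> (0 < i \<and> (i - 1, j) \<in> D)" using a unfolding gBD_def by simp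
    consider "i = 0" | "i = 1" | "2 \<le> i" by linarith
    then show "\<exists>j'. (i,j') \<in> gBP P y K"
    proof cases
      case 1 then show ?thesis unfolding inP using tlt_root[OF T] by (intro exI[of _ 0]) simp
    next
      case 2 then show ?thesis unfolding inP by (intro exI[of _ y]) simp
    next
      case 3
      then have "(i - 1, j) \<in> D" using c by auto
      then obtain j' where "(i - 1, j') \<in> P" using tlt_row[OF T] by blast
      then show ?thesis unfolding inP using 3 by (intro exI[of _ j']) simp
    qed
  next
    fix i j assume a: "(i,j) \<in> gBD D"
    have c: "(i = 0 \<and> (0,j) \<in> D) \<or> (0 < i \<and> (i - 1, j) \<in> D)" using a unfolding gBD_def by simp
    have "(0,j) \<in> D" using c ferrers_down[OF F, of "i - 1" j 0 j] by auto
    then obtain i' where i': "(i', j) \<in> P" using tlt_col[OF T] by blast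
    show "\<exists>i'. (i',j) \<in> gBP P y K"
    proof (cases "i' = 0")
      case True then show ?thesis using row0 i' by blast
    next
      case False
      then have "(i' + 1, j) \<in> gBP P y K" unfolding inP using i' by auto
      then show ?thesis by blast
    qed
  qed
qed


lemma gB_misc:
  assumes T: "tree_like_tableau D P" and y: "y \<in> R0 P" and K: "K \<subseteq> {j \<in> R0 P. y < j}"
  shows "card (gBP P y K) = card P + 1"
    and "(1, rowlen (gBD D) 0 - 1) \<in> gBD D"
    and "R0 (gBP P y K) = {j \<in> R0 P. j \<le> y \<or> j \<in> K}"
proof -
  have F: "ferrers D" using tlt_ferrers[OF T] .
  have y0: "(0,y) \<in> P" using y unfolding R0_def by simp
  have Kp: "\<And>j. j \<in> K \<Longrightarrow> (0,j) \<in> P \<and> y < j" using K unfolding R0_def by auto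
  define k where "k = (\<lambda>(i::nat,j::nat). if i = 0 then (if j \<le> y \<or> j \<in> K then (0,j) else (1,j)) else (i+1,j))"
  have inj: "inj_on k P"
  proof (rule inj_onI)
    fix p q assume p: "p \<in> P" and q: "q \<in> P" and e: "k p = k q"
    obtain i j where pij: "p = (i,j)" by (cases p)
    obtain i' j' where qij: "q = (i',j')" by (cases q)
    show "p = q" using e unfolding pij qij k_def by (auto split: if_splits)
  qed
  have img: "gBP P y K = insert (1,y) (k ` P)"
  proof (intro equalityI subsetI)
    fix q assume "q \<in> gBP P y K"
    then obtain i j where q: "q = (i,j)" and c: "(i = 0 \<and> (0,j) \<in> P \<and> (j \<le> y \<or> j \<in> K)) \<or>
      (i = 1 \<and> (j = y \<or> ((0,j) \<in> P \<and> y < j \<and> j \<notin> K))) \<or> (2 \<le> i \<and> (i - 1, j) \<in> P)"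
      unfolding gBP_def by auto
    consider "i = 0" "(0,j) \<in> P" "j \<le> y \<or> j \<in> K" | "i = 1" "j = y" | "i = 1" "(0,j) \<in> P" "y < j" "j \<notin> K"
      | "2 \<le> i" "(i - 1, j) \<in> P" using c by auto
    then show "q \<in> insert (1,y) (k ` P)"
    proof cases
      case 1 then show ?thesis unfolding q k_def by (intro insertI2 rev_image_eqI[of "(0,j)"]) auto
    next
      case 2 then show ?thesis unfolding q by simp
    next
      case 3 then show ?thesis unfolding q k_def by (intro insertI2 rev_image_eqI[of "(0,j)"]) auto
    next
      case 4 then show ?thesis unfolding q k_def by (intro insertI2 rev_image_eqI[of "(i - 1,j)"]) auto
    qed
  next
    fix q assume "q \<in> insert (1,y) (k ` P)"
    then show "q \<in> gBP P y K"
    proof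
      assume "q = (1,y)" then show ?thesis unfolding gBP_def by simp
    next
      assume "q \<in> k ` P"
      then obtain i j where ij: "(i,j) \<in> P" "q = k (i,j)" by auto
      show ?thesis using ij unfolding k_def gBP_def by (auto split: if_splits)
    qed
  qed
  have notin: "(1,y) \<notin> k ` P"
  proof
    assume "(1,y) \<in> k ` P"
    then obtain i j where ij: "(i,j) \<in> P" "(1,y) = k (i,j)" by auto
    then show False unfolding k_def by (auto split: if_splits)
  qed
  show "card (gBP P y K) = card P + 1" unfolding img using notin card_image[OF inj] tlt_finP[OF T] by simp
  have rl: "rowlen (gBD D) 0 = rowlen D 0" unfolding rowlen_def gBD_def by simp
  have "rowlen D 0 \<ge> 1" using ferrers_row[OF F, of 0 0] ferrers_00[OF F] by simp
  then have "(0, rowlen D 0 - 1) \<in> D" using ferrers_row[OF F, of 0 "rowlen D 0 - 1"] by simp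
  then have "(1, rowlen D 0 - 1) \<in> gBD D" unfolding gBD_def by simp
  then show "(1, rowlen (gBD D) 0 - 1) \<in> gBD D" using rl by simp
  show "R0 (gBP P y K) = {j \<in> R0 P. j \<le> y \<or> j \<in> K}" unfolding R0_def gBP_def by auto
qed

lemma fB_gB:
  assumes "(D,P) \<in> caseB n"
  defines "y \<equiv> yB P"
  shows "gBD (fBD D) = D" "gBP (fBP P y) y (fBK P y) = P"
proof -
  note fa = caseB_facts[OF assms(1)]
  have T: "tree_like_tableau D P" by (rule fa(1))
  have y1: "(1,y) \<in> P" and y0: "(0,y) \<in> P" using fa(4) fa(5) y_def by auto
  have oth: "\<And>j. (1,j) \<in> P \<Longrightarrow> j \<noteq> y \<Longrightarrow> y < j \<and> (0,j) \<notin> P" using fa(7) y_def by auto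
  have rr: "\<And>j. (1,j) \<in> D \<longleftrightarrow> (0,j) \<in> D" by (rule fa(3))
  show "gBD (fBD D) = D"
  proof (intro equalityI subsetI)
    fix p assume "p \<in> gBD (fBD D)"
    then obtain i j where p: "p = (i,j)" and c: "(i = 0 \<and> (1,j) \<in> D) \<or> (0 < i \<and> (i,j) \<in> D)"
      unfolding gBD_def fBD_def by auto
    show "p \<in> D" using c rr unfolding p by auto
  next
    fix p assume pD: "p \<in> D"
    obtain i j where p: "p = (i,j)" by (cases p)
    show "p \<in> gBD (fBD D)"
    proof (cases "i = 0")
      case True then show ?thesis using pD rr unfolding p gBD_def fBD_def by auto
    next
      case False then have "Suc (i - 1) = i" by simp
      then show ?thesis using pD False unfolding p gBD_def fBD_def by auto
    qed
  qed
  show "gBP (fBP P y) y (fBK P y) = P"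
  proof (intro equalityI subsetI)
    fix p assume "p \<in> gBP (fBP P y) y (fBK P y)"
    then obtain i j where p: "p = (i,j)" and c: "(i,j) \<in> gBP (fBP P y) y (fBK P y)" by (cases p) auto
    show "p \<in> P" using c y1 oth[of j] unfolding p gBP_def fBP_def fBK_def by (auto split: if_splits)
  next
    fix p assume pP: "p \<in> P"
    obtain i j where p: "p = (i,j)" by (cases p)
    consider "i = 0" | "i = 1" | "2 \<le> i" by linarith
    then show "p \<in> gBP (fBP P y) y (fBK P y)"
    proof cases
      case 1 then show ?thesis using pP unfolding p gBP_def fBP_def fBK_def by auto
    next
      case 2 then show ?thesis using pP oth[of j] unfolding p gBP_def fBP_def fBK_def by auto
    next
      case 3 then show ?thesis using pP unfolding p gBP_def fBP_def fBK_def by auto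
    qed
  qed
qed

lemma gB_fB:
  assumes T: "tree_like_tableau D P" and y: "y \<in> R0 P" and K: "K \<subseteq> {j \<in> R0 P. y < j}"
  shows "fBD (gBD D) = D" "yB (gBP P y K) = y" "fBP (gBP P y K) y = P" "fBK (gBP P y K) y = K"
proof -
  show "fBD (gBD D) = D" unfolding fBD_def gBD_def by auto
  have Kp: "\<And>j. j \<in> K \<Longrightarrow> (0,j) \<in> P \<and> y < j" using K unfolding R0_def by auto
  have y0: "(0,y) \<in> P" using y unfolding R0_def by simp
  have a: "(1,y) \<in> gBP P y K" unfolding gBP_def by simp
  have b: "\<And>j. (1,j) \<in> gBP P y K \<Longrightarrow> y \<le> j" unfolding gBP_def by auto
  show "yB (gBP P y K) = y" unfolding yB_def
    by (rule Least_equality[where P="\<lambda>j. (1,j) \<in> gBP P y K"]) (use a b in auto)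
  show "fBP (gBP P y K) y = P"
  proof (intro equalityI subsetI)
    fix p assume "p \<in> fBP (gBP P y K) y"
    then obtain i j where p: "p = (i,j)" and c: "(i,j) \<in> fBP (gBP P y K) y" by (cases p) auto
    show "p \<in> P" using c unfolding p gBP_def fBP_def by auto
  next
    fix p assume pP: "p \<in> P"
    obtain i j where p: "p = (i,j)" by (cases p)
    show "p \<in> fBP (gBP P y K) y"
    proof (cases "i = 0")
      case True then show ?thesis using pP unfolding p gBP_def fBP_def by auto
    next
      case False then show ?thesis using pP unfolding p gBP_def fBP_def by auto
    qed
  qed
  show "fBK (gBP P y K) y = K" unfolding fBK_def gBP_def using Kp by auto
qed


lemma sum_pow_card:
  assumes "finite G"
  shows "(\<Sum>K\<in>Pow G. (x::nat) ^ card K) = (1 + x) ^ card G"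
proof -
  have "(\<Prod>a\<in>G. x + 1) = (\<Sum>X\<in>Pow G. (\<Prod>a\<in>X. x) * (\<Prod>a\<in>G - X. 1))"
    by (rule prod_add) fact
  then show ?thesis by (simp add: add.commute)
qed

lemma poly_lemma:
  fixes R :: "nat set"
  assumes "finite R"
  shows "(\<Sum>y\<in>R. (x::nat) ^ card {j\<in>R. j \<le> y} * (1 + x) ^ card {j\<in>R. y < j}) + x ^ (card R + 1)
    = x * (1 + x) ^ card R"
  using assms
proof (induction R rule: finite_linorder_max_induct)
  case empty
  then show ?case by simp
next
  case (insert b A)
  have bA: "b \<notin> A" using insert.hyps(2) by auto
  have e1: "\<And>y. y \<in> A \<Longrightarrow> {j\<in>insert b A. j \<le> y} = {j\<in>A. j \<le> y}" using insert.hyps(2) by auto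
  have e2: "\<And>y. y \<in> A \<Longrightarrow> card {j\<in>insert b A. y < j} = card {j\<in>A. y < j} + 1"
  proof -
    fix y assume y: "y \<in> A"
    have "{j\<in>insert b A. y < j} = insert b {j\<in>A. y < j}" using insert.hyps(2) y by auto
    then show "card {j\<in>insert b A. y < j} = card {j\<in>A. y < j} + 1" using bA insert.hyps(1) by simp
  qed
  have e3: "{j\<in>insert b A. j \<le> b} = insert b A" using insert.hyps(2) by auto
  have e4: "{j\<in>insert b A. b < j} = {}" using insert.hyps(2) by auto
  have cI: "card (insert b A) = card A + 1" using bA insert.hyps(1) by simp
  have "(\<Sum>y\<in>insert b A. x ^ card {j\<in>insert b A. j \<le> y} * (1 + x) ^ card {j\<in>insert b A. y < j})
     = x ^ (card A + 1) + (\<Sum>y\<in>A. x ^ card {j\<in>insert b A. j \<le> y} * (1 + x) ^ card {j\<in>insert b A. y < j})"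
    using bA insert.hyps(1) e3 e4 cI by simp
  also have "(\<Sum>y\<in>A. x ^ card {j\<in>insert b A. j \<le> y} * (1 + x) ^ card {j\<in>insert b A. y < j})
     = (1 + x) * (\<Sum>y\<in>A. x ^ card {j\<in>A. j \<le> y} * (1 + x) ^ card {j\<in>A. y < j})"
    unfolding sum_distrib_left
  proof (rule sum.cong)
    fix y assume y: "y \<in> A"
    show "x ^ card {j\<in>insert b A. j \<le> y} * (1 + x) ^ card {j\<in>insert b A. y < j} =
      (1 + x) * (x ^ card {j\<in>A. j \<le> y} * (1 + x) ^ card {j\<in>A. y < j})"
      unfolding e1[OF y] e2[OF y] by (simp add: algebra_simps)
  qed simp
  finally have s: "(\<Sum>y\<in>insert b A. x ^ card {j\<in>insert b A. j \<le> y} * (1 + x) ^ card {j\<in>insert b A. y < j})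
     = x ^ (card A + 1) + (1 + x) * (\<Sum>y\<in>A. x ^ card {j\<in>A. j \<le> y} * (1 + x) ^ card {j\<in>A. y < j})" .
  define S where "S = (\<Sum>y\<in>A. x ^ card {j\<in>A. j \<le> y} * (1 + x) ^ card {j\<in>A. y < j})"
  have ih: "S + x ^ (card A + 1) = x * (1 + x) ^ card A" using insert.IH unfolding S_def .
  have "x ^ (card A + 1) + (1 + x) * S + x ^ (card A + 1 + 1) = (1 + x) * (S + x ^ (card A + 1))"
    by (simp add: algebra_simps)
  also have "\<dots> = x * (1 + x) ^ (card A + 1)" unfolding ih by (simp add: algebra_simps)
  finally show ?case unfolding s cI S_def .
qed


definition Ydom :: "nat \<Rightarrow> (((nat \<times> nat) set \<times> (nat \<times> nat) set) \<times> nat \<times> nat set) set" where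
  "Ydom m = (SIGMA T:tlts m. SIGMA y:R0 (snd T). Pow {j \<in> R0 (snd T). y < j})"
definition gBt :: "((nat \<times> nat) set \<times> (nat \<times> nat) set) \<times> nat \<times> nat set \<Rightarrow> (nat \<times> nat) set \<times> (nat \<times> nat) set" where
  "gBt X = (gBD (fst (fst X)), gBP (snd (fst X)) (fst (snd X)) (snd (snd X)))"
definition fBt :: "(nat \<times> nat) set \<times> (nat \<times> nat) set \<Rightarrow> ((nat \<times> nat) set \<times> (nat \<times> nat) set) \<times> nat \<times> nat set" where
  "fBt T = ((fBD (fst T), fBP (snd T) (yB (snd T))), yB (snd T), fBK (snd T) (yB (snd T)))"

lemma bij_B:
  assumes n: "n \<ge> 1"
  shows "bij_betw gBt (Ydom (n-1)) (caseB n)"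
proof (rule bij_betw_byWitness[where f'=fBt])
  show "\<forall>a\<in>Ydom (n - 1). fBt (gBt a) = a"
  proof
    fix a assume "a \<in> Ydom (n-1)"
    then obtain D P y K where a: "a = ((D,P),y,K)" and T: "tree_like_tableau D P" and y: "y \<in> R0 P"
      and K: "K \<subseteq> {j \<in> R0 P. y < j}" unfolding Ydom_def tlts_def by auto
    show "fBt (gBt a) = a" unfolding a gBt_def fBt_def using gB_fB[OF T y K] by simp
  qed
  show "\<forall>a'\<in>caseB n. gBt (fBt a') = a'"
  proof
    fix a assume a: "a \<in> caseB n"
    obtain D P where aa: "a = (D,P)" by (cases a)
    show "gBt (fBt a) = a" unfolding aa gBt_def fBt_def using fB_gB[of D P n] a aa by simp
  qed
  show "gBt ` Ydom (n - 1) \<subseteq> caseB n"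
  proof
    fix b assume "b \<in> gBt ` Ydom (n - 1)"
    then obtain D P y K where b: "b = gBt ((D,P),y,K)" and T: "tree_like_tableau D P" and y: "y \<in> R0 P"
      and K: "K \<subseteq> {j \<in> R0 P. y < j}" and c: "card P = n - 1" unfolding Ydom_def tlts_def by auto
    show "b \<in> caseB n" unfolding b gBt_def caseB_def tlts_def
      using gB_tlt[OF T y K] gB_misc[OF T y K] c n by simp
  qed
  show "fBt ` caseB n \<subseteq> Ydom (n - 1)"
  proof
    fix b assume "b \<in> fBt ` caseB n"
    then obtain D P where b: "b = fBt (D,P)" and a: "(D,P) \<in> caseB n" by auto
    show "b \<in> Ydom (n-1)" unfolding b fBt_def Ydom_def tlts_def
      using fB_tlt[OF a] fB_card[OF a] fB_Y[OF a] by auto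
  qed
qed

lemma caseB_sum:
  assumes n: "n \<ge> 2"
  shows "(\<Sum>T\<in>caseB n. (x::nat) ^ card (R0 (snd T))) + x * (\<Sum>T\<in>tlts (n-1). x ^ card (R0 (snd T)))
     = x * (\<Sum>T\<in>tlts (n-1). (1 + x) ^ card (R0 (snd T)))"
proof -
  define F where "F = (\<lambda>(T::(nat \<times> nat) set \<times> (nat \<times> nat) set) y. x ^ card {j\<in>R0 (snd T). j \<le> y} * (1 + x) ^ card {j\<in>R0 (snd T). y < j})"
  have "(\<Sum>T\<in>caseB n. x ^ card (R0 (snd T))) = (\<Sum>X\<in>Ydom (n-1). x ^ card (R0 (snd (gBt X))))"
  proof -
    have "n \<ge> 1" using n by simp
    from sum.reindex_bij_betw[OF bij_B[OF this], symmetric] show ?thesis .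
  qed
  also have "\<dots> = (\<Sum>X\<in>Ydom (n-1). x ^ card {j\<in>R0 (snd (fst X)). j \<le> fst (snd X)} * x ^ card (snd (snd X)))"
  proof (rule sum.cong[OF refl])
    fix X assume "X \<in> Ydom (n-1)"
    then obtain D P y K where a: "X = ((D,P),y,K)" and T: "tree_like_tableau D P" and y: "y \<in> R0 P"
      and K: "K \<subseteq> {j \<in> R0 P. y < j}" unfolding Ydom_def tlts_def by auto
    have fin: "finite (R0 P)" using R0_fin[OF T] .
    have "{j \<in> R0 P. j \<le> y \<or> j \<in> K} = {j \<in> R0 P. j \<le> y} \<union> K" using K by auto
    moreover have "{j \<in> R0 P. j \<le> y} \<inter> K = {}" using K by auto
    moreover have "finite K"
    proof (rule finite_subset[OF _ fin])
      show "K \<subseteq> R0 P" using K by auto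
    qed
    ultimately have "card {j \<in> R0 P. j \<le> y \<or> j \<in> K} = card {j \<in> R0 P. j \<le> y} + card K"
      using fin by (simp add: card_Un_disjoint)
    then show "x ^ card (R0 (snd (gBt X))) = x ^ card {j\<in>R0 (snd (fst X)). j \<le> fst (snd X)} * x ^ card (snd (snd X))"
      unfolding a gBt_def using gB_misc(3)[OF T y K] by (simp add: power_add)
  qed
  also have "\<dots> = (\<Sum>T\<in>tlts (n-1). \<Sum>y\<in>R0 (snd T). \<Sum>K\<in>Pow {j \<in> R0 (snd T). y < j}.
        x ^ card {j\<in>R0 (snd T). j \<le> y} * x ^ card K)"
  proof -
    have fin1: "finite (tlts (n-1))" by (rule finite_tlts)
    have fin2: "\<forall>T\<in>tlts (n - 1). finite (SIGMA y:R0 (snd T). Pow {j \<in> R0 (snd T). y < j})"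
      by (auto simp: tlts_def intro!: finite_SigmaI R0_fin)
    have "(\<Sum>T\<in>tlts (n-1). \<Sum>y\<in>R0 (snd T). \<Sum>K\<in>Pow {j \<in> R0 (snd T). y < j}.
        x ^ card {j\<in>R0 (snd T). j \<le> y} * x ^ card K) =
      (\<Sum>T\<in>tlts (n-1). \<Sum>Z\<in>(SIGMA y:R0 (snd T). Pow {j \<in> R0 (snd T). y < j}).
        x ^ card {j\<in>R0 (snd T). j \<le> fst Z} * x ^ card (snd Z))"
    proof (rule sum.cong[OF refl])
      fix T assume "T \<in> tlts (n-1)"
      then have fin: "finite (R0 (snd T))" by (auto simp: tlts_def intro: R0_fin)
      show "(\<Sum>y\<in>R0 (snd T). \<Sum>K\<in>Pow {j \<in> R0 (snd T). y < j}.
        x ^ card {j\<in>R0 (snd T). j \<le> y} * x ^ card K) =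
        (\<Sum>Z\<in>(SIGMA y:R0 (snd T). Pow {j \<in> R0 (snd T). y < j}).
        x ^ card {j\<in>R0 (snd T). j \<le> fst Z} * x ^ card (snd Z))"
        by (subst sum.Sigma) (auto simp: fin split_def)
    qed
    also have "\<dots> = (\<Sum>X\<in>Ydom (n-1). x ^ card {j\<in>R0 (snd (fst X)). j \<le> fst (snd X)} * x ^ card (snd (snd X)))"
      unfolding Ydom_def by (subst sum.Sigma[OF fin1 fin2]) (simp add: split_def)
    finally show ?thesis by simp
  qed
  also have "\<dots> = (\<Sum>T\<in>tlts (n-1). \<Sum>y\<in>R0 (snd T). F T y)"
  proof (rule sum.cong[OF refl])
    fix T assume "T \<in> tlts (n-1)"
    then have fin: "finite (R0 (snd T))" by (auto simp: tlts_def intro: R0_fin)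
    show "(\<Sum>y\<in>R0 (snd T). \<Sum>K\<in>Pow {j \<in> R0 (snd T). y < j}. x ^ card {j\<in>R0 (snd T). j \<le> y} * x ^ card K)
      = (\<Sum>y\<in>R0 (snd T). F T y)"
    proof (rule sum.cong[OF refl])
      fix y assume "y \<in> R0 (snd T)"
      have "finite {j \<in> R0 (snd T). y < j}" using fin by simp
      then show "(\<Sum>K\<in>Pow {j \<in> R0 (snd T). y < j}. x ^ card {j\<in>R0 (snd T). j \<le> y} * x ^ card K) = F T y"
        unfolding F_def by (simp add: sum_distrib_left[symmetric] sum_pow_card)
    qed
  qed
  finally have eq: "(\<Sum>T\<in>caseB n. x ^ card (R0 (snd T))) = (\<Sum>T\<in>tlts (n-1). \<Sum>y\<in>R0 (snd T). F T y)" .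
  have "(\<Sum>T\<in>tlts (n-1). \<Sum>y\<in>R0 (snd T). F T y) + x * (\<Sum>T\<in>tlts (n-1). x ^ card (R0 (snd T)))
     = (\<Sum>T\<in>tlts (n-1). (\<Sum>y\<in>R0 (snd T). F T y) + x ^ (card (R0 (snd T)) + 1))"
    by (simp add: sum.distrib sum_distrib_left)
  also have "\<dots> = (\<Sum>T\<in>tlts (n-1). x * (1 + x) ^ card (R0 (snd T)))"
  proof (rule sum.cong[OF refl])
    fix T assume "T \<in> tlts (n-1)"
    then have fin: "finite (R0 (snd T))" by (auto simp: tlts_def intro: R0_fin)
    show "(\<Sum>y\<in>R0 (snd T). F T y) + x ^ (card (R0 (snd T)) + 1) = x * (1 + x) ^ card (R0 (snd T))"
      unfolding F_def by (rule poly_lemma[OF fin])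
  qed
  finally show ?thesis unfolding eq by (simp add: sum_distrib_left)
qed


lemma tlts_1: "tlts 1 = {({(0,0)},{(0,0)})}"
proof (intro equalityI subsetI)
  fix T assume "T \<in> tlts 1"
  then obtain D P where TT: "T = (D,P)" and T: "tree_like_tableau D P" and c: "card P = 1"
    unfolding tlts_def by auto
  have P: "P = {(0,0)}" using c tlt_root[OF T] by (metis card_1_singletonE singletonD)
  have "D \<subseteq> {..<1} \<times> {..<1}" using tlt_box[OF T] c by simp
  then have "D \<subseteq> {(0,0)}" by auto
  then have "D = {(0,0)}" using ferrers_00[OF tlt_ferrers[OF T]] by auto
  then show "T \<in> {({(0,0)},{(0,0)})}" using TT P by simp
next
  fix T assume "T \<in> {({(0::nat,0::nat)},{(0::nat,0::nat)})}"
  then have TT: "T = ({(0,0)},{(0,0)})" by simp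
  have "tree_like_tableau {(0,0)} {(0,0)}"
    unfolding tree_like_tableau_def ferrers_def by auto
  then show "T \<in> tlts 1" unfolding TT tlts_def by simp
qed

definition W :: "nat \<Rightarrow> nat \<Rightarrow> nat" where
  "W n x = (\<Sum>T\<in>tlts n. x ^ card (R0 (snd T)))"

lemma W_1: "W 1 x = x"
proof -
  have "R0 {(0::nat,0::nat)} = {0}" unfolding R0_def by auto
  then show ?thesis unfolding W_def tlts_1 by simp
qed

lemma W_rec:
  assumes n: "n \<ge> 2"
  shows "W n x = x * W (n-1) (1 + x)"
proof -
  have part: "tlts n = caseA n \<union> caseB n" unfolding caseA_def caseB_def by auto
  have disj: "caseA n \<inter> caseB n = {}" unfolding caseA_def caseB_def by auto
  have fA: "finite (caseA n)" "finite (caseB n)" using finite_tlts[of n] part by auto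
  have "W n x = (\<Sum>T\<in>caseA n. x ^ card (R0 (snd T))) + (\<Sum>T\<in>caseB n. x ^ card (R0 (snd T)))"
    unfolding W_def part using fA disj by (simp add: sum.union_disjoint)
  also have "\<dots> = x * W (n-1) (1 + x)"
    using caseA_sum[OF n, of x] caseB_sum[OF n, of x] unfolding W_def by simp
  finally show ?thesis .
qed

lemma W_poch: "n \<ge> 1 \<Longrightarrow> W n x = pochhammer x n"
proof (induction n arbitrary: x rule: nat_induct_at_least)
  case base
  then show ?case using W_1 by simp
next
  case (Suc m)
  have "W (Suc m) x = x * W m (1 + x)" using W_rec[of "Suc m"] Suc.hyps by simp
  also have "\<dots> = x * pochhammer (x + 1) m" using Suc.IH by (simp add: add.commute)
  finally show ?case by (simp add: pochhammer_rec)
qed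

lemma card_tlts: "n \<ge> 1 \<Longrightarrow> card (tlts n) = fact n"
proof -
  assume n: "n \<ge> 1"
  have "card (tlts n) = W n 1" unfolding W_def by simp
  also have "\<dots> = pochhammer 1 n" using W_poch[OF n] .
  also have "\<dots> = fact n" by (simp add: pochhammer_fact)
  finally show ?thesis .
qed


definition occ :: "(nat \<times> nat) set \<Rightarrow> (nat \<times> nat) set \<Rightarrow> (nat \<times> nat) set" where
  "occ D P = {c \<in> P. is_corner D c}"

lemma corner_same_row:
  assumes F: "ferrers D" and c1: "is_corner D (i, j)" and c2: "is_corner D (i, j')"
  shows "j = j'"
proof (rule ccontr)
  assume "j \<noteq> j'"
  then consider "j < j'" | "j' < j" by linarith
  then show False
  proof cases
    case 1
    have "(i, j') \<in> D" using c2 unfolding is_corner_def by simp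
    then have "(i, j + 1) \<in> D" using ferrers_down[OF F, of i j' i "j+1"] 1 by simp
    then show False using c1 unfolding is_corner_def by simp
  next
    case 2
    have "(i, j) \<in> D" using c1 unfolding is_corner_def by simp
    then have "(i, j' + 1) \<in> D" using ferrers_down[OF F, of i j i "j'+1"] 2 by simp
    then show False using c2 unfolding is_corner_def by simp
  qed
qed

lemma corner_same_col:
  assumes F: "ferrers D" and c1: "is_corner D (i, j)" and c2: "is_corner D (i', j)"
  shows "i = i'"
proof (rule ccontr)
  assume "i \<noteq> i'"
  then consider "i < i'" | "i' < i" by linarith
  then show False
  proof cases
    case 1
    have "(i', j) \<in> D" using c2 unfolding is_corner_def by simp
    then have "(i + 1, j) \<in> D" using ferrers_down[OF F, of i' j "i+1" j] 1 by simp
    then show False using c1 unfolding is_corner_def by simp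
  next
    case 2
    have "(i, j) \<in> D" using c1 unfolding is_corner_def by simp
    then have "(i' + 1, j) \<in> D" using ferrers_down[OF F, of i j "i'+1" j] 2 by simp
    then show False using c2 unfolding is_corner_def by simp
  qed
qed

lemma Lcorner_facts:
  assumes T: "tree_like_tableau D P" and cP: "(i0, j0) \<in> P" and cc: "is_corner D (i0, j0)"
    and L: "\<exists>j'<j0. (i0, j') \<in> P"
  shows "j0 \<ge> 1" "\<And>i. (i, j0) \<in> D \<longleftrightarrow> i \<le> i0" "\<And>j. (i0, j) \<in> D \<longleftrightarrow> j \<le> j0"
    "\<And>i. (i, j0) \<in> P \<longleftrightarrow> i = i0" "\<not> (\<exists>i'<i0. (i', j0) \<in> P)"
proof -
  have F: "ferrers D" using tlt_ferrers[OF T] .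
  have cD: "(i0,j0) \<in> D" using cc unfolding is_corner_def by simp
  have n1: "(i0 + 1, j0) \<notin> D" and n2: "(i0, j0 + 1) \<notin> D" using cc unfolding is_corner_def by auto
  show "j0 \<ge> 1" using L by auto
  show cold: "\<And>i. (i, j0) \<in> D \<longleftrightarrow> i \<le> i0"
  proof
    fix i assume "(i, j0) \<in> D"
    then show "i \<le> i0" using ferrers_down[OF F, of i j0 "i0+1" j0] n1 by (cases "i \<le> i0") auto
  next
    fix i assume "i \<le> i0" then show "(i, j0) \<in> D" using ferrers_down[OF F cD, of i j0] by simp
  qed
  show "\<And>j. (i0, j) \<in> D \<longleftrightarrow> j \<le> j0"
  proof
    fix j assume "(i0, j) \<in> D"
    then show "j \<le> j0" using ferrers_down[OF F, of i0 j i0 "j0+1"] n2 by (cases "j \<le> j0") auto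
  next
    fix j assume "j \<le> j0" then show "(i0, j) \<in> D" using ferrers_down[OF F cD, of i0 j] by simp
  qed
  have nr: "(i0, j0) \<noteq> (0,0)" using L by auto
  show nu: "\<not> (\<exists>i'<i0. (i', j0) \<in> P)" using tlt_pt[OF T cP nr] L by simp
  show "\<And>i. (i, j0) \<in> P \<longleftrightarrow> i = i0"
  proof
    fix i assume a: "(i, j0) \<in> P"
    then have "i \<le> i0" using cold tlt_sub[OF T] by blast
    moreover have "\<not> i < i0" using nu a by blast
    ultimately show "i = i0" by simp
  next
    fix i assume "i = i0" then show "(i, j0) \<in> P" using cP by simp
  qed
qed


definition sg :: "nat \<Rightarrow> nat \<Rightarrow> nat" where "sg j0 j = (if j < j0 then j else Suc j)"
definition tg :: "nat \<Rightarrow> nat \<Rightarrow> nat" where "tg j0 j = (if j < j0 then j else j - 1)"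
definition delc :: "nat \<Rightarrow> (nat \<times> nat) set \<Rightarrow> (nat \<times> nat) set" where
  "delc j0 X = {(i,j). (i, sg j0 j) \<in> X}"

lemma sg_ne: "sg j0 j \<noteq> j0" unfolding sg_def by auto
lemma sg_tg: "j \<noteq> j0 \<Longrightarrow> sg j0 (tg j0 j) = j" unfolding sg_def tg_def by auto
lemma tg_sg: "tg j0 (sg j0 j) = j" unfolding sg_def tg_def by auto
lemma sg_less: "sg j0 a < sg j0 b \<longleftrightarrow> a < b" unfolding sg_def by auto
lemma sg_le: "sg j0 a \<le> sg j0 b \<longleftrightarrow> a \<le> b" unfolding sg_def by auto
lemma sg_inj: "sg j0 a = sg j0 b \<longleftrightarrow> a = b" unfolding sg_def by auto
lemma sg_0: "j0 \<ge> 1 \<Longrightarrow> sg j0 0 = 0" unfolding sg_def by auto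
lemma sg_eq0: "sg j0 j = 0 \<longleftrightarrow> j = 0 \<and> 0 < j0" unfolding sg_def by auto
lemma sg_Suc: "sg j0 (Suc j) \<ge> Suc (sg j0 j)" unfolding sg_def by auto
lemma less_sg: "j'' < sg j0 j \<Longrightarrow> j'' \<noteq> j0 \<Longrightarrow> tg j0 j'' < j" unfolding sg_def tg_def by (auto split: if_splits)

lemma delc_bij: "bij_betw (\<lambda>(i,j). (i, sg j0 j)) (delc j0 X) {p\<in>X. snd p \<noteq> j0}"
  unfolding bij_betw_def
proof
  show "inj_on (\<lambda>(i, j). (i, sg j0 j)) (delc j0 X)"
    by (rule inj_onI) (auto simp: sg_inj)
  show "(\<lambda>(i, j). (i, sg j0 j)) ` delc j0 X = {p \<in> X. snd p \<noteq> j0}"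
  proof (intro equalityI subsetI)
    fix p assume "p \<in> (\<lambda>(i, j). (i, sg j0 j)) ` delc j0 X"
    then show "p \<in> {p \<in> X. snd p \<noteq> j0}" unfolding delc_def using sg_ne by auto
  next
    fix p assume p: "p \<in> {p \<in> X. snd p \<noteq> j0}"
    obtain i j where pij: "p = (i,j)" by (cases p)
    have "(i, tg j0 j) \<in> delc j0 X" unfolding delc_def using p pij sg_tg by auto
    moreover have "p = (\<lambda>(i, j). (i, sg j0 j)) (i, tg j0 j)" using p pij sg_tg by auto
    ultimately show "p \<in> (\<lambda>(i, j). (i, sg j0 j)) ` delc j0 X" by blast
  qed
qed

lemma remL_props:
  assumes T: "tree_like_tableau D P" and cS: "(i0, j0) \<in> S" and So: "S \<subseteq> occ D P"
    and L: "\<exists>j'<j0. (i0, j') \<in> P"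
  shows "tree_like_tableau (delc j0 D) (delc j0 P)" "card (delc j0 P) = card P - 1"
    "delc j0 S \<subseteq> occ (delc j0 D) (delc j0 P)" "card (delc j0 S) = card S - 1"
    "i0 \<in> rowsD (delc j0 D)" "i0 \<notin> fst ` delc j0 S"
proof -
  have F: "ferrers D" using tlt_ferrers[OF T] .
  have cP: "(i0,j0) \<in> P" and cc: "is_corner D (i0,j0)" using cS So unfolding occ_def by auto
  note fa = Lcorner_facts[OF T cP cc L]
  have j01: "j0 \<ge> 1" by (rule fa(1))
  have colP: "\<And>i. (i, j0) \<in> P \<longleftrightarrow> i = i0" by (rule fa(4))
  have rowD: "\<And>j. (i0, j) \<in> D \<longleftrightarrow> j \<le> j0" by (rule fa(3))
  have F2: "ferrers (delc j0 D)"
  proof (rule ferrersI)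
    have "delc j0 D \<subseteq> {..<card P} \<times> {..<card P}"
    proof
      fix p assume "p \<in> delc j0 D"
      then obtain i j where p: "p = (i,j)" "(i, sg j0 j) \<in> D" unfolding delc_def by auto
      have "j \<le> sg j0 j" unfolding sg_def by auto
      then show "p \<in> {..<card P} \<times> {..<card P}"
        using tlt_bound_row[OF T p(2)] tlt_bound_col[OF T p(2)] p(1) by auto
    qed
    then show "finite (delc j0 D)" by (rule finite_subset) simp
    show "(0,0) \<in> delc j0 D" unfolding delc_def using ferrers_00[OF F] sg_0[OF j01] by simp
    fix i j i' j' assume a: "(i,j) \<in> delc j0 D" "i' \<le> i" "j' \<le> j"
    then show "(i',j') \<in> delc j0 D" unfolding delc_def
      using ferrers_down[OF F, of i "sg j0 j" i' "sg j0 j'"] sg_le[of j0 j' j] by simp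
  qed
  show T1: "tree_like_tableau (delc j0 D) (delc j0 P)"
  proof (rule tltI[OF F2])
    show "delc j0 P \<subseteq> delc j0 D" unfolding delc_def using tlt_sub[OF T] by auto
    show "(0,0) \<in> delc j0 P" unfolding delc_def using tlt_root[OF T] sg_0[OF j01] by simp
  next
    fix i j assume p: "(i,j) \<in> delc j0 P" "(i,j) \<noteq> (0,0)"
    have pP: "(i, sg j0 j) \<in> P" using p(1) unfolding delc_def by simp
    have nr: "(i, sg j0 j) \<noteq> (0,0)" using p(2) sg_eq0[of j0 j] by auto
    have Lq: "(\<exists>j'<j. (i,j') \<in> delc j0 P) = (\<exists>j''<sg j0 j. (i,j'') \<in> P)"
    proof
      assume "\<exists>j'<j. (i,j') \<in> delc j0 P"
      then obtain j' where "j' < j" "(i, sg j0 j') \<in> P" unfolding delc_def by auto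
      then show "\<exists>j''<sg j0 j. (i,j'') \<in> P" using sg_less[of j0 j' j] by blast
    next
      assume "\<exists>j''<sg j0 j. (i,j'') \<in> P"
      then obtain j'' where j'': "j'' < sg j0 j" "(i,j'') \<in> P" by blast
      show "\<exists>j'<j. (i,j') \<in> delc j0 P"
      proof (cases "j'' = j0")
        case True
        then have "i = i0" using colP j'' by simp
        then have "sg j0 j \<le> j0" using rowD pP tlt_sub[OF T] by blast
        then show ?thesis using j''(1) True by simp
      next
        case False
        then have "tg j0 j'' < j" using less_sg j''(1) by blast
        moreover have "(i, tg j0 j'') \<in> delc j0 P" unfolding delc_def using sg_tg[OF False] j''(2) by simp
        ultimately show ?thesis by blast
      qed
    qed
    have Uq: "(\<exists>i'<i. (i',j) \<in> delc j0 P) = (\<exists>i'<i. (i', sg j0 j) \<in> P)"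
      unfolding delc_def by simp
    show "(\<exists>j'<j. (i,j') \<in> delc j0 P) \<noteq> (\<exists>i'<i. (i',j) \<in> delc j0 P)"
      unfolding Lq Uq using tlt_pt[OF T pP nr] .
  next
    fix i j assume a: "(i,j) \<in> delc j0 D"
    then obtain j' where j': "(i, j') \<in> P" using tlt_row[OF T] unfolding delc_def by blast
    show "\<exists>j'. (i,j') \<in> delc j0 P"
    proof (cases "j' = j0")
      case True
      then have "i = i0" using colP j' by simp
      then obtain j'' where "j'' < j0" "(i, j'') \<in> P" using L by blast
      then have "(i, tg j0 j'') \<in> delc j0 P" unfolding delc_def using sg_tg[of j'' j0] by simp
      then show ?thesis by blast
    next
      case False
      then have "(i, tg j0 j') \<in> delc j0 P" unfolding delc_def using sg_tg[OF False] j' by simp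
      then show ?thesis by blast
    qed
  next
    fix i j assume a: "(i,j) \<in> delc j0 D"
    then obtain i' where "(i', sg j0 j) \<in> P" using tlt_col[OF T] unfolding delc_def by blast
    then show "\<exists>i'. (i',j) \<in> delc j0 P" unfolding delc_def by blast
  qed
  have colS: "{p\<in>S. snd p \<noteq> j0} = S - {(i0,j0)}"
  proof -
    have "i = i0" if "(i,j0) \<in> S" for i
    proof -
      have "(i,j0) \<in> P" using that So unfolding occ_def by auto
      then show ?thesis using colP[of i] by simp
    qed
    note h = this
    show ?thesis
    proof (intro equalityI subsetI)
      fix p assume "p \<in> {p\<in>S. snd p \<noteq> j0}" then show "p \<in> S - {(i0,j0)}" by auto
    next
      fix p assume p: "p \<in> S - {(i0,j0)}"
      obtain i j where pij: "p = (i,j)" by (cases p)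
      have "j \<noteq> j0"
      proof
        assume "j = j0" then have "(i, j0) \<in> S" using p pij by simp
        then have "i = i0" by (rule h)
        then show False using p pij \<open>j = j0\<close> by simp
      qed
      then show "p \<in> {p\<in>S. snd p \<noteq> j0}" using p pij by simp
    qed
  qed
  have colP2: "{p\<in>P. snd p \<noteq> j0} = P - {(i0,j0)}" by (auto simp: colP)
  show "card (delc j0 P) = card P - 1"
    using bij_betw_same_card[OF delc_bij[of j0 P]] colP2 cP tlt_finP[OF T] by simp
  have "S \<subseteq> P" using So unfolding occ_def by auto
  then have finS: "finite S" using tlt_finP[OF T] by (rule finite_subset)
  show "card (delc j0 S) = card S - 1"
    using bij_betw_same_card[OF delc_bij[of j0 S]] colS cS finS by simp
  show "delc j0 S \<subseteq> occ (delc j0 D) (delc j0 P)"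
  proof
    fix p assume "p \<in> delc j0 S"
    then obtain i j where p: "p = (i,j)" and pS: "(i, sg j0 j) \<in> S" unfolding delc_def by auto
    have pP: "(i, sg j0 j) \<in> P" and pc: "is_corner D (i, sg j0 j)" using pS So unfolding occ_def by auto
    have "(i+1, sg j0 j) \<notin> D" "(i, sg j0 j + 1) \<notin> D" "(i, sg j0 j) \<in> D"
      using pc unfolding is_corner_def by auto
    moreover have "(i, sg j0 (j+1)) \<notin> D"
    proof
      assume "(i, sg j0 (j+1)) \<in> D"
      then have "(i, sg j0 j + 1) \<in> D" using ferrers_down[OF F, of i "sg j0 (j+1)" i "sg j0 j + 1"] sg_Suc[of j0 j]
        by simp
      then show False using calculation by simp
    qed
    ultimately show "p \<in> occ (delc j0 D) (delc j0 P)"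
      unfolding p occ_def is_corner_def delc_def using pP by simp
  qed
  show "i0 \<in> rowsD (delc j0 D)" unfolding rowsD_def delc_def using rowD sg_0[OF j01] by simp
  show "i0 \<notin> fst ` delc j0 S"
  proof
    assume "i0 \<in> fst ` delc j0 S"
    then obtain j where "(i0, sg j0 j) \<in> S" unfolding delc_def by auto
    then have "is_corner D (i0, sg j0 j)" using So unfolding occ_def by auto
    then have "sg j0 j = j0" using corner_same_row[OF F _ cc] by blast
    then show False using sg_ne by simp
  qed
qed


definition insc :: "nat \<Rightarrow> (nat \<times> nat) set \<Rightarrow> (nat \<times> nat) set" where
  "insc j0 X = (\<lambda>(i,j). (i, sg j0 j)) ` X"

lemma mem_insc: "(i,j) \<in> insc j0 X \<longleftrightarrow> j \<noteq> j0 \<and> (i, tg j0 j) \<in> X"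
proof
  assume "(i,j) \<in> insc j0 X"
  then obtain a b where "(a,b) \<in> X" "(i,j) = (a, sg j0 b)" unfolding insc_def by auto
  then show "j \<noteq> j0 \<and> (i, tg j0 j) \<in> X" using sg_ne tg_sg by auto
next
  assume a: "j \<noteq> j0 \<and> (i, tg j0 j) \<in> X"
  then have "(i,j) = (\<lambda>(i,j). (i, sg j0 j)) (i, tg j0 j)" using sg_tg by auto
  then show "(i,j) \<in> insc j0 X" unfolding insc_def using a by blast
qed

lemma insc_delc: "insc j0 (delc j0 X) = {p\<in>X. snd p \<noteq> j0}"
  using delc_bij[of j0 X] unfolding bij_betw_def insc_def by simp

lemma delc_insc: "delc j0 (insc j0 X) = X"
  unfolding delc_def by (auto simp: mem_insc tg_sg sg_ne)

lemma card_insc: "card (insc j0 X) = card X"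
  unfolding insc_def by (rule card_image) (auto simp: inj_on_def sg_inj)

lemma tg_mono: "a \<le> b \<Longrightarrow> tg j0 a \<le> tg j0 b" unfolding tg_def by auto
lemma tg_less: "a < b \<Longrightarrow> a \<noteq> j0 \<Longrightarrow> b \<noteq> j0 \<Longrightarrow> tg j0 a < tg j0 b" unfolding tg_def by auto
lemma sg_tg_less: "j'' < tg j0 j \<Longrightarrow> j \<noteq> j0 \<Longrightarrow> sg j0 j'' < j"
  unfolding sg_def tg_def by (auto split: if_splits)

definition colD :: "nat \<Rightarrow> nat \<Rightarrow> (nat \<times> nat) set" where
  "colD i0 j0 = {p. snd p = j0 \<and> fst p \<le> i0}"

lemma insL_props:
  assumes T: "tree_like_tableau D1 P1" and So: "S1 \<subseteq> occ D1 P1" and r: "i0 \<in> rowsD D1"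
    and nb: "i0 \<notin> fst ` S1" and j0: "j0 = rowlen D1 i0"
  defines "D \<equiv> insc j0 D1 \<union> colD i0 j0" and "P \<equiv> insert (i0,j0) (insc j0 P1)"
    and "S \<equiv> insert (i0,j0) (insc j0 S1)"
  shows "tree_like_tableau D P" "card P = card P1 + 1" "S \<subseteq> occ D P" "card S = card S1 + 1"
    "\<exists>j'<j0. (i0, j') \<in> P"
proof -
  have F1: "ferrers D1" using tlt_ferrers[OF T] .
  have rowi0: "\<And>j. (i0,j) \<in> D1 \<longleftrightarrow> j < j0" using ferrers_row[OF F1] j0 by simp
  have i00: "(i0,0) \<in> D1" using r unfolding rowsD_def by simp
  have j01: "j0 \<ge> 1" using i00 rowi0[of 0] by simp
  have big: "\<And>i j. (i,j) \<in> D1 \<Longrightarrow> j0 \<le> j \<Longrightarrow> i < i0"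
  proof (rule ccontr)
    fix i j assume a: "(i,j) \<in> D1" "j0 \<le> j" "\<not> i < i0"
    then have "(i0, j) \<in> D1" using ferrers_down[OF F1 a(1), of i0 j] by simp
    then show False using rowi0[of j] a(2) by simp
  qed
  have memD: "\<And>i j. (i,j) \<in> D \<longleftrightarrow> (j \<noteq> j0 \<and> (i, tg j0 j) \<in> D1) \<or> (j = j0 \<and> i \<le> i0)"
    unfolding D_def colD_def by (auto simp: mem_insc)
  have memP: "\<And>i j. (i,j) \<in> P \<longleftrightarrow> (i,j) = (i0,j0) \<or> (j \<noteq> j0 \<and> (i, tg j0 j) \<in> P1)"
    unfolding P_def by (auto simp: mem_insc)
  have tg0: "tg j0 0 = 0" unfolding tg_def using j01 by simp
  have FD: "ferrers D"
  proof (rule ferrersI)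
    show "finite D" unfolding D_def insc_def colD_def
    proof (intro finite_UnI finite_imageI tlt_finD[OF T])
      have "{p. snd p = j0 \<and> fst p \<le> i0} \<subseteq> {..i0} \<times> {j0}" by auto
      then show "finite {p. snd p = j0 \<and> fst p \<le> i0}" by (rule finite_subset) simp
    qed
    show "(0,0) \<in> D" unfolding memD using j01 tg0 ferrers_00[OF F1] by simp
    fix i j i' j' assume a: "(i,j) \<in> D" "i' \<le> i" "j' \<le> j"
    show "(i',j') \<in> D"
    proof (cases "j' = j0")
      case True
      have "i \<le> i0"
      proof (cases "j = j0")
        case True then show ?thesis using a(1) unfolding memD by simp
      next
        case False
        then have "(i, tg j0 j) \<in> D1" "j0 < j" using a(1) a(3) \<open>j' = j0\<close> unfolding memD by auto
        moreover have "tg j0 j = j - 1" using \<open>j0 < j\<close> unfolding tg_def by simp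
        ultimately have "i < i0" using big[of i "j - 1"] by simp
        then show ?thesis by simp
      qed
      then show ?thesis unfolding memD using True a(2) by simp
    next
      case False
      have "(i', tg j0 j') \<in> D1"
      proof (cases "j = j0")
        case True
        then have "i \<le> i0" using a(1) unfolding memD by simp
        have "(i0, j0 - 1) \<in> D1" using rowi0 j01 by simp
        moreover have "tg j0 j' \<le> j0 - 1" using a(3) True False unfolding tg_def by auto
        ultimately show ?thesis using ferrers_down[OF F1, of i0 "j0 - 1" i' "tg j0 j'"] \<open>i \<le> i0\<close> a(2) by simp
      next
        case False
        then have "(i, tg j0 j) \<in> D1" using a(1) unfolding memD by simp
        then show ?thesis using ferrers_down[OF F1, of i "tg j0 j" i' "tg j0 j'"] a tg_mono[OF a(3)] by simp
      qed
      then show ?thesis unfolding memD using False by simp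
    qed
  qed
  obtain jr where jr: "(i0, jr) \<in> P1" using tlt_row[OF T i00] by blast
  have jrl: "jr < j0" using jr tlt_sub[OF T] rowi0 by blast
  have jrP: "(i0, jr) \<in> P" unfolding memP using jrl jr by (simp add: tg_def)
  show hl: "\<exists>j'<j0. (i0, j') \<in> P" using jrl jrP by blast
  show "tree_like_tableau D P"
  proof (rule tltI[OF FD])
    show "P \<subseteq> D"
    proof
      fix p assume "p \<in> P"
      then obtain i j where pij: "p = (i,j)" "(i,j) \<in> P" by (cases p) auto
      then show "p \<in> D" using tlt_sub[OF T] by (auto simp: memD memP)
    qed
    show "(0,0) \<in> P" unfolding memP using tlt_root[OF T] j01 tg0 by simp
  next
    fix i j assume p: "(i,j) \<in> P" "(i,j) \<noteq> (0,0)"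
    show "(\<exists>j'<j. (i,j') \<in> P) \<noteq> (\<exists>i'<i. (i',j) \<in> P)"
    proof (cases "(i,j) = (i0,j0)")
      case True
      have "\<not> (\<exists>i'<i. (i',j) \<in> P)" unfolding memP using True by auto
      then show ?thesis using hl True by auto
    next
      case False
      then have jn: "j \<noteq> j0" and q: "(i, tg j0 j) \<in> P1" using p(1) unfolding memP by auto
      have qnr: "(i, tg j0 j) \<noteq> (0,0)"
      proof
        assume "(i, tg j0 j) = (0,0)"
        then have "i = 0" "tg j0 j = 0" by auto
        then have "j = 0" using jn j01 unfolding tg_def by (auto split: if_splits)
        then show False using p(2) \<open>i = 0\<close> by simp
      qed
      have Lq: "(\<exists>j'<j. (i,j') \<in> P) = (\<exists>j''<tg j0 j. (i,j'') \<in> P1)"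
      proof
        assume "\<exists>j'<j. (i,j') \<in> P"
        then obtain j' where j': "j' < j" "(i,j') \<in> P" by blast
        show "\<exists>j''<tg j0 j. (i,j'') \<in> P1"
        proof (cases "(i,j') = (i0,j0)")
          case True
          then have "i = i0" "j0 < j" using j' by auto
          have "(i0, tg j0 j) \<in> D1" using q tlt_sub[OF T] \<open>i = i0\<close> by auto
          moreover have "tg j0 j = j - 1" using \<open>j0 < j\<close> unfolding tg_def by simp
          ultimately show ?thesis using rowi0[of "j - 1"] \<open>j0 < j\<close> by simp
        next
          case False
          then have "j' \<noteq> j0" "(i, tg j0 j') \<in> P1" using j'(2) unfolding memP by auto
          moreover have "tg j0 j' < tg j0 j" using tg_less[OF j'(1) \<open>j' \<noteq> j0\<close> jn] .
          ultimately show ?thesis by blast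
        qed
      next
        assume "\<exists>j''<tg j0 j. (i,j'') \<in> P1"
        then obtain j'' where j'': "j'' < tg j0 j" "(i,j'') \<in> P1" by blast
        have "(i, sg j0 j'') \<in> P" unfolding memP using j'' sg_ne tg_sg by simp
        moreover have "sg j0 j'' < j" using sg_tg_less[OF j''(1) jn] .
        ultimately show "\<exists>j'<j. (i,j') \<in> P" by blast
      qed
      have Uq: "(\<exists>i'<i. (i',j) \<in> P) = (\<exists>i'<i. (i', tg j0 j) \<in> P1)"
        unfolding memP using jn by auto
      show ?thesis unfolding Lq Uq using tlt_pt[OF T q qnr] .
    qed
  next
    fix i j assume a: "(i,j) \<in> D"
    then have "(i,0) \<in> D" using ferrers_down[OF FD a, of i 0] by simp
    then have "(i,0) \<in> D1" unfolding memD using j01 tg0 by simp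
    then obtain j' where "(i,j') \<in> P1" using tlt_row[OF T] by blast
    then have "(i, sg j0 j') \<in> P" unfolding memP using sg_ne tg_sg by simp
    then show "\<exists>j'. (i,j') \<in> P" by blast
  next
    fix i j assume a: "(i,j) \<in> D"
    show "\<exists>i'. (i',j) \<in> P"
    proof (cases "j = j0")
      case True then show ?thesis unfolding memP by blast
    next
      case False
      then have "(i, tg j0 j) \<in> D1" using a unfolding memD by simp
      then obtain i' where "(i', tg j0 j) \<in> P1" using tlt_col[OF T] by blast
      then have "(i', j) \<in> P" unfolding memP using False by simp
      then show ?thesis by blast
    qed
  qed
  have cnot: "(i0,j0) \<notin> insc j0 X" for X by (simp add: mem_insc)
  have finP1: "finite P1" using tlt_finP[OF T] .
  have finI: "finite (insc j0 X)" if "finite X" for X unfolding insc_def using that by simp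
  show "card P = card P1 + 1" unfolding P_def using cnot finI[OF finP1] card_insc[of j0 P1] by simp
  have S1P1: "S1 \<subseteq> P1" using So unfolding occ_def by auto
  have finS1: "finite S1" using finite_subset[OF S1P1 finP1] .
  show "card S = card S1 + 1" unfolding S_def using cnot finI[OF finS1] card_insc[of j0 S1] by simp
  show "S \<subseteq> occ D P"
  proof
    fix p assume "p \<in> S"
    then consider "p = (i0,j0)" | "p \<in> insc j0 S1" unfolding S_def by auto
    then show "p \<in> occ D P"
    proof cases
      case 1
      have "(i0,j0) \<in> D" "(i0+1, j0) \<notin> D" unfolding memD by auto
      moreover have "(i0, j0+1) \<notin> D" unfolding memD using rowi0 unfolding tg_def by simp
      ultimately show ?thesis unfolding 1 occ_def is_corner_def P_def by simp
    next
      case 2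
      then obtain i j where pij: "p = (i,j)" and jn: "j \<noteq> j0" and q: "(i, tg j0 j) \<in> S1"
        by (cases p) (auto simp: mem_insc)
      have qP: "(i, tg j0 j) \<in> P1" and qc: "is_corner D1 (i, tg j0 j)" using q So unfolding occ_def by auto
      have qD: "(i, tg j0 j) \<in> D1" and q1: "(i+1, tg j0 j) \<notin> D1" and q2: "(i, tg j0 j + 1) \<notin> D1"
        using qc unfolding is_corner_def by auto
      have pP: "(i,j) \<in> P" unfolding memP using jn qP by simp
      have pD: "(i,j) \<in> D" unfolding memD using jn qD by simp
      have n1: "(i+1,j) \<notin> D" unfolding memD using jn q1 by simp
      have n2: "(i,j+1) \<notin> D"
      proof (cases "j + 1 = j0")
        case True
        then have tj: "tg j0 j = j0 - 1" unfolding tg_def by simp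
        have "i \<noteq> i0" using nb q by force
        moreover have "\<not> i < i0"
        proof
          assume "i < i0"
          have "(i0, j0 - 1) \<in> D1" using rowi0 j01 by simp
          then have "(i+1, j0 - 1) \<in> D1" using ferrers_down[OF F1, of i0 "j0 - 1" "i+1" "j0 - 1"] \<open>i < i0\<close> by simp
          then show False using q1 tj by simp
        qed
        ultimately show ?thesis unfolding memD using True by simp
      next
        case False
        have "tg j0 (j+1) = tg j0 j + 1" using False jn unfolding tg_def by auto
        then show ?thesis unfolding memD using q2 False by simp
      qed
      show ?thesis unfolding pij occ_def is_corner_def using pP pD n1 n2 by simp
    qed
  qed
qed


definition NS :: "nat \<Rightarrow> nat \<Rightarrow> (((nat \<times> nat) set \<times> (nat \<times> nat) set) \<times> (nat \<times> nat) set) set" where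
  "NS n k = {((D,P),S). (D,P) \<in> tlts n \<and> S \<subseteq> occ D P \<and> card S = k}"

definition LPL :: "nat \<Rightarrow> nat \<Rightarrow> ((((nat \<times> nat) set \<times> (nat \<times> nat) set) \<times> (nat \<times> nat) set) \<times> (nat \<times> nat)) set" where
  "LPL n k = {(X,c). X \<in> NS n k \<and> c \<in> snd X \<and> (\<exists>j'<snd c. (fst c, j') \<in> snd (fst X))}"

definition RPL :: "nat \<Rightarrow> nat \<Rightarrow> ((((nat \<times> nat) set \<times> (nat \<times> nat) set) \<times> (nat \<times> nat) set) \<times> (nat + nat)) set" where
  "RPL m k = {(X,e). X \<in> NS m k \<and> (\<exists>i. e = Inl i \<and> i \<in> rowsD (fst (fst X)) \<and> i \<notin> fst ` snd X)}"

definition remL :: "(((nat \<times> nat) set \<times> (nat \<times> nat) set) \<times> (nat \<times> nat) set) \<times> (nat \<times> nat) \<Rightarrow>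
    (((nat \<times> nat) set \<times> (nat \<times> nat) set) \<times> (nat \<times> nat) set) \<times> (nat + nat)" where
  "remL Z = (((delc (snd (snd Z)) (fst (fst (fst Z))), delc (snd (snd Z)) (snd (fst (fst Z)))),
             delc (snd (snd Z)) (snd (fst Z))), Inl (fst (snd Z)))"

definition insL :: "(((nat \<times> nat) set \<times> (nat \<times> nat) set) \<times> (nat \<times> nat) set) \<times> (nat + nat) \<Rightarrow>
    (((nat \<times> nat) set \<times> (nat \<times> nat) set) \<times> (nat \<times> nat) set) \<times> (nat \<times> nat)" where
  "insL Z = (let i0 = projl (snd Z); j0 = rowlen (fst (fst (fst Z))) i0 in
     (((insc j0 (fst (fst (fst Z))) \<union> colD i0 j0, insert (i0,j0) (insc j0 (snd (fst (fst Z))))),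
       insert (i0,j0) (insc j0 (snd (fst Z)))), (i0,j0)))"

lemma delc_Un: "delc j0 (A \<union> B) = delc j0 A \<union> delc j0 B" unfolding delc_def by auto
lemma delc_colD: "delc j0 (colD i0 j0) = {}" unfolding delc_def colD_def using sg_ne by auto
lemma delc_insert_col: "delc j0 (insert (i0,j0) A) = delc j0 A" unfolding delc_def using sg_ne by auto

lemma split5:
  obtains D P S i0 j0 where "a = (((D,P),S),(i0,j0))"
proof -
  obtain X c where a1: "a = (X,c)" by (cases a)
  obtain DP S where a2: "X = (DP,S)" by (cases X)
  obtain D P where a3: "DP = (D,P)" by (cases DP)
  obtain i0 j0 where a4: "c = (i0,j0)" by (cases c)
  show thesis using that a1 a2 a3 a4 by blast
qed

lemma split4:
  obtains D P S e where "a = (((D,P),S),e)"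
proof -
  obtain X c where a1: "a = (X,c)" by (cases a)
  obtain DP S where a2: "X = (DP,S)" by (cases X)
  obtain D P where a3: "DP = (D,P)" by (cases DP)
  show thesis using that a1 a2 a3 by blast
qed

lemma LPL_iff: "(((D,P),S),(i0,j0)) \<in> LPL n k \<longleftrightarrow> tree_like_tableau D P \<and> card P = n \<and> S \<subseteq> occ D P \<and>
   card S = k \<and> (i0,j0) \<in> S \<and> (\<exists>j'<j0. (i0,j') \<in> P)"
  unfolding LPL_def NS_def tlts_def by auto

lemma RPL_iff: "(((D,P),S),e) \<in> RPL n k \<longleftrightarrow> tree_like_tableau D P \<and> card P = n \<and> S \<subseteq> occ D P \<and>
   card S = k \<and> (\<exists>i. e = Inl i \<and> i \<in> rowsD D \<and> i \<notin> fst ` S)"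
  unfolding RPL_def NS_def tlts_def by auto

lemma bij_L:
  assumes n: "n \<ge> 2" and k: "k \<ge> 1"
  shows "bij_betw remL (LPL n k) (RPL (n-1) (k-1))"
proof (rule bij_betw_byWitness[where f'=insL])
  show "\<forall>a\<in>LPL n k. insL (remL a) = a"
  proof
    fix a assume a: "a \<in> LPL n k"
    obtain D P S i0 j0 where aa: "a = (((D,P),S),(i0,j0))" by (rule split5)
    have T: "tree_like_tableau D P"
      and cP: "card P = n" and So: "S \<subseteq> occ D P" and cS: "card S = k" and c: "(i0,j0) \<in> S"
      and L: "\<exists>j'<j0. (i0, j') \<in> P" using a unfolding aa LPL_iff by auto
    have cP': "(i0,j0) \<in> P" and cc: "is_corner D (i0,j0)" using c So unfolding occ_def by auto
    note fa = Lcorner_facts[OF T cP' cc L]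
    have rl: "rowlen (delc j0 D) i0 = j0"
    proof -
      have "{j. (i0, j) \<in> delc j0 D} = {..<j0}"
      proof (intro equalityI subsetI)
        fix j assume "j \<in> {j. (i0, j) \<in> delc j0 D}"
        then have "sg j0 j \<le> j0" using fa(3) unfolding delc_def by simp
        then show "j \<in> {..<j0}" unfolding sg_def by (auto split: if_splits)
      next
        fix j assume "j \<in> {..<j0}"
        then show "j \<in> {j. (i0, j) \<in> delc j0 D}" using fa(3) unfolding delc_def sg_def by simp
      qed
      then show ?thesis unfolding rowlen_def by simp
    qed
    have eD: "insc j0 (delc j0 D) \<union> colD i0 j0 = D"
    proof (intro equalityI subsetI)
      fix p assume p: "p \<in> insc j0 (delc j0 D) \<union> colD i0 j0"
      obtain i j where pij: "p = (i,j)" by (cases p)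
      show "p \<in> D"
      proof (cases "j = j0")
        case True then show ?thesis using p fa(2)[of i] unfolding pij insc_delc colD_def by simp
      next
        case False then show ?thesis using p unfolding pij insc_delc colD_def by simp
      qed
    next
      fix p assume p: "p \<in> D"
      obtain i j where pij: "p = (i,j)" by (cases p)
      show "p \<in> insc j0 (delc j0 D) \<union> colD i0 j0"
      proof (cases "j = j0")
        case True then show ?thesis using p fa(2)[of i] unfolding pij insc_delc colD_def by simp
      next
        case False then show ?thesis using p unfolding pij insc_delc colD_def by simp
      qed
    qed
    have SP: "S \<subseteq> P" using So unfolding occ_def by auto
    have colX: "insert (i0,j0) (insc j0 (delc j0 X)) = X" if "X \<subseteq> P" "(i0,j0) \<in> X" for X
    proof (intro equalityI subsetI)
      fix p assume p: "p \<in> insert (i0,j0) (insc j0 (delc j0 X))"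
      then show "p \<in> X" using that(2) unfolding insc_delc by auto
    next
      fix p assume p: "p \<in> X"
      obtain i j where pij: "p = (i,j)" by (cases p)
      show "p \<in> insert (i0,j0) (insc j0 (delc j0 X))"
      proof (cases "j = j0")
        case True
        then have "(i,j0) \<in> P" using p that(1) pij by auto
        then have "i = i0" using fa(4)[of i] by simp
        then show ?thesis using True pij by simp
      next
        case False then show ?thesis using p pij unfolding insc_delc by simp
      qed
    qed
    have eP: "insert (i0,j0) (insc j0 (delc j0 P)) = P" using colX[of P] cP' by simp
    have eS: "insert (i0,j0) (insc j0 (delc j0 S)) = S" using colX[of S] c SP by simp
    show "insL (remL a) = a" unfolding aa remL_def insL_def using rl eD eP eS by simp
  qed
  show "\<forall>a'\<in>RPL (n-1) (k-1). remL (insL a') = a'"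
  proof
    fix a assume a: "a \<in> RPL (n-1) (k-1)"
    obtain D1 P1 S1 e where aa0: "a = (((D1,P1),S1), e)" by (rule split4)
    have "(((D1,P1),S1),e) \<in> RPL (n-1) (k-1)" using a aa0 by simp
    then obtain i0 where "e = Inl i0" unfolding RPL_iff by auto
    then have aa: "a = (((D1,P1),S1), Inl i0)" using aa0 by simp
    define j0 where "j0 = rowlen D1 i0"
    show "remL (insL a) = a" unfolding aa remL_def insL_def Let_def j0_def[symmetric]
      by (simp add: delc_Un delc_colD delc_insert_col delc_insc)
  qed
  show "remL ` LPL n k \<subseteq> RPL (n-1) (k-1)"
  proof
    fix b assume "b \<in> remL ` LPL n k"
    then obtain a where b: "b = remL a" and a: "a \<in> LPL n k" by auto
    obtain D P S i0 j0 where aa: "a = (((D,P),S),(i0,j0))" by (rule split5)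
    have T: "tree_like_tableau D P"
      and cP: "card P = n" and So: "S \<subseteq> occ D P" and cS: "card S = k" and c: "(i0,j0) \<in> S"
      and L: "\<exists>j'<j0. (i0, j') \<in> P" using a unfolding aa LPL_iff by auto
    note r = remL_props[OF T c So L]
    show "b \<in> RPL (n-1) (k-1)" unfolding b aa remL_def RPL_def NS_def tlts_def
      using r cP cS by simp
  qed
  show "insL ` RPL (n-1) (k-1) \<subseteq> LPL n k"
  proof
    fix b assume "b \<in> insL ` RPL (n-1) (k-1)"
    then obtain a where b: "b = insL a" and a: "a \<in> RPL (n-1) (k-1)" by auto
    obtain D1 P1 S1 e where aa0: "a = (((D1,P1),S1), e)" by (rule split4)
    have "(((D1,P1),S1),e) \<in> RPL (n-1) (k-1)" using a aa0 by simp
    then obtain i0 where "e = Inl i0" unfolding RPL_iff by auto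
    then have aa: "a = (((D1,P1),S1), Inl i0)" using aa0 by simp
    have T: "tree_like_tableau D1 P1"
      and cP: "card P1 = n - 1" and So: "S1 \<subseteq> occ D1 P1" and cS: "card S1 = k - 1"
      and r: "i0 \<in> rowsD D1" and nb: "i0 \<notin> fst ` S1" using a unfolding aa RPL_iff by auto
    define j0 where "j0 = rowlen D1 i0"
    note ip = insL_props[OF T So r nb j0_def]
    show "b \<in> LPL n k" unfolding b aa insL_def Let_def j0_def[symmetric] LPL_def NS_def tlts_def
      using ip cP cS n k by (simp add: j0_def[symmetric])
  qed
qed


definition trp :: "(nat \<times> nat) set \<Rightarrow> (nat \<times> nat) set" where
  "trp X = (\<lambda>(i,j). (j,i)) ` X"

lemma mem_trp[simp]: "(i,j) \<in> trp X \<longleftrightarrow> (j,i) \<in> X"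
  unfolding trp_def by force

lemma trp_trp[simp]: "trp (trp X) = X"
  unfolding trp_def by (force simp: image_image)

lemma card_trp: "card (trp X) = card X"
  unfolding trp_def by (rule card_image) (auto simp: inj_on_def)

lemma ferrers_trp: "ferrers D \<Longrightarrow> ferrers (trp D)"
proof -
  assume F: "ferrers D"
  show "ferrers (trp D)"
  proof (rule ferrersI)
    show "finite (trp D)" using F unfolding ferrers_def trp_def by simp
    show "(0,0) \<in> trp D" using ferrers_00[OF F] by simp
    fix i j i' j' assume "(i,j) \<in> trp D" "i' \<le> i" "j' \<le> j"
    then show "(i',j') \<in> trp D" using ferrers_down[OF F, of j i j' i'] by simp
  qed
qed

lemma tlt_trp: "tree_like_tableau D P \<Longrightarrow> tree_like_tableau (trp D) (trp P)"
proof -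
  assume T: "tree_like_tableau D P"
  show ?thesis
  proof (rule tltI[OF ferrers_trp[OF tlt_ferrers[OF T]]])
    show "trp P \<subseteq> trp D" using tlt_sub[OF T] unfolding trp_def by auto
    show "(0,0) \<in> trp P" using tlt_root[OF T] by simp
  next
    fix i j assume "(i,j) \<in> trp P" "(i,j) \<noteq> (0,0)"
    then have "(j,i) \<in> P" "(j,i) \<noteq> (0,0)" by auto
    then have "(\<exists>j'<i. (j,j') \<in> P) \<noteq> (\<exists>i'<j. (i',i) \<in> P)" using tlt_pt[OF T] by blast
    then show "(\<exists>j'<j. (i,j') \<in> trp P) \<noteq> (\<exists>i'<i. (i',j) \<in> trp P)" by auto
  next
    fix i j assume "(i,j) \<in> trp D"
    then have "(j,i) \<in> D" by simp
    then obtain i' where "(i',i) \<in> P" using tlt_col[OF T] by blast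
    then show "\<exists>j'. (i,j') \<in> trp P" by auto
  next
    fix i j assume "(i,j) \<in> trp D"
    then have "(j,i) \<in> D" by simp
    then obtain j' where "(j,j') \<in> P" using tlt_row[OF T] by blast
    then show "\<exists>i'. (i',j) \<in> trp P" by auto
  qed
qed

lemma corner_trp: "is_corner (trp D) (j,i) \<longleftrightarrow> is_corner D (i,j)"
  unfolding is_corner_def by auto

lemma occ_trp: "occ (trp D) (trp P) = trp (occ D P)"
proof (intro equalityI subsetI)
  fix p assume "p \<in> occ (trp D) (trp P)"
  then obtain i j where "p = (i,j)" "(j,i) \<in> P" "is_corner (trp D) (i,j)" unfolding occ_def by (cases p) auto
  then show "p \<in> trp (occ D P)" unfolding occ_def using corner_trp[of D i j] by simp
next
  fix p assume "p \<in> trp (occ D P)"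
  then obtain i j where "p = (i,j)" "(j,i) \<in> P" "is_corner D (j,i)" unfolding occ_def by (cases p) auto
  then show "p \<in> occ (trp D) (trp P)" unfolding occ_def using corner_trp[of D i j] by simp
qed

lemma trp_mono: "S \<subseteq> X \<Longrightarrow> trp S \<subseteq> trp X" unfolding trp_def by auto

lemma rowsD_trp: "rowsD (trp D) = colsD D" unfolding rowsD_def colsD_def by simp
lemma colsD_trp: "colsD (trp D) = rowsD D" unfolding rowsD_def colsD_def by simp
lemma fst_trp: "fst ` trp S = snd ` S" unfolding trp_def by force
lemma snd_trp: "snd ` trp S = fst ` S" unfolding trp_def by force

lemma root_not_corner:
  assumes T: "tree_like_tableau D P" and n: "card P \<ge> 2"
  shows "\<not> is_corner D (0,0)"
proof
  assume c: "is_corner D (0,0)"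
  have F: "ferrers D" using tlt_ferrers[OF T] .
  have "D \<subseteq> {(0,0)}"
  proof
    fix p assume p: "p \<in> D"
    obtain i j where pij: "p = (i,j)" by (cases p)
    have "i = 0"
    proof (rule ccontr)
      assume "i \<noteq> 0"
      then have "(1,0) \<in> D" using ferrers_down[OF F, of i j 1 0] p pij by simp
      then show False using c unfolding is_corner_def by simp
    qed
    moreover have "j = 0"
    proof (rule ccontr)
      assume "j \<noteq> 0"
      then have "(0,1) \<in> D" using ferrers_down[OF F, of i j 0 1] p pij by simp
      then show False using c unfolding is_corner_def by simp
    qed
    ultimately show "p \<in> {(0,0)}" using pij by simp
  qed
  then have "P \<subseteq> {(0,0)}" using tlt_sub[OF T] by blast
  then have "card P \<le> card {(0::nat,0::nat)}" by (rule card_mono[rotated]) simp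
  then show False using n by simp
qed

definition LPU :: "nat \<Rightarrow> nat \<Rightarrow> ((((nat \<times> nat) set \<times> (nat \<times> nat) set) \<times> (nat \<times> nat) set) \<times> (nat \<times> nat)) set" where
  "LPU n k = {(X,c). X \<in> NS n k \<and> c \<in> snd X \<and> \<not> (\<exists>j'<snd c. (fst c, j') \<in> snd (fst X))}"

definition RPR :: "nat \<Rightarrow> nat \<Rightarrow> ((((nat \<times> nat) set \<times> (nat \<times> nat) set) \<times> (nat \<times> nat) set) \<times> (nat + nat)) set" where
  "RPR m k = {(X,e). X \<in> NS m k \<and> (\<exists>j. e = Inr j \<and> j \<in> colsD (fst (fst X)) \<and> j \<notin> snd ` snd X)}"

definition tauL :: "(((nat \<times> nat) set \<times> (nat \<times> nat) set) \<times> (nat \<times> nat) set) \<times> (nat \<times> nat) \<Rightarrow>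
   (((nat \<times> nat) set \<times> (nat \<times> nat) set) \<times> (nat \<times> nat) set) \<times> (nat \<times> nat)" where
  "tauL Z = (((trp (fst (fst (fst Z))), trp (snd (fst (fst Z)))), trp (snd (fst Z))), prod.swap (snd Z))"

definition tauR :: "(((nat \<times> nat) set \<times> (nat \<times> nat) set) \<times> (nat \<times> nat) set) \<times> (nat + nat) \<Rightarrow>
   (((nat \<times> nat) set \<times> (nat \<times> nat) set) \<times> (nat \<times> nat) set) \<times> (nat + nat)" where
  "tauR Z = (((trp (fst (fst (fst Z))), trp (snd (fst (fst Z)))), trp (snd (fst Z))), case_sum Inr Inl (snd Z))"

lemma NS_iff: "((D,P),S) \<in> NS n k \<longleftrightarrow> tree_like_tableau D P \<and> card P = n \<and> S \<subseteq> occ D P \<and> card S = k"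
  unfolding NS_def tlts_def by auto

lemma NS_trp: "((D,P),S) \<in> NS n k \<Longrightarrow> ((trp D, trp P), trp S) \<in> NS n k"
  unfolding NS_iff using tlt_trp card_trp occ_trp trp_mono by metis

lemma card_LPU:
  assumes n: "n \<ge> 2"
  shows "card (LPU n k) = card (LPL n k)"
proof (rule bij_betw_same_card[of tauL])
  show "bij_betw tauL (LPU n k) (LPL n k)"
  proof (rule bij_betw_byWitness[where f'=tauL])
    show "\<forall>a\<in>LPU n k. tauL (tauL a) = a" by (auto simp: tauL_def)
    show "\<forall>a\<in>LPL n k. tauL (tauL a) = a" by (auto simp: tauL_def)
    show "tauL ` LPU n k \<subseteq> LPL n k"
    proof
      fix b assume "b \<in> tauL ` LPU n k"
      then obtain a where b: "b = tauL a" and a: "a \<in> LPU n k" by auto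
      obtain D P S i0 j0 where aa: "a = (((D,P),S),(i0,j0))" by (rule split5)
      have X: "((D,P),S) \<in> NS n k" and c: "(i0,j0) \<in> S" and nl: "\<not> (\<exists>j'<j0. (i0,j') \<in> P)"
        using a unfolding aa LPU_def by auto
      have T: "tree_like_tableau D P" and cP: "card P = n" and So: "S \<subseteq> occ D P" using X unfolding NS_iff by auto
      have cP': "(i0,j0) \<in> P" and cc: "is_corner D (i0,j0)" using c So unfolding occ_def by auto
      have nr: "(i0,j0) \<noteq> (0,0)"
      proof
        assume "(i0,j0) = (0,0)"
        then show False using root_not_corner[OF T] cc cP n by simp
      qed
      have "\<exists>i'<i0. (i',j0) \<in> P" using tlt_pt[OF T cP' nr] nl by simp
      then have "\<exists>j'<i0. (j0,j') \<in> trp P" by simp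
      then show "b \<in> LPL n k" unfolding b aa tauL_def LPL_def using NS_trp[OF X] c by simp
    qed
    show "tauL ` LPL n k \<subseteq> LPU n k"
    proof
      fix b assume "b \<in> tauL ` LPL n k"
      then obtain a where b: "b = tauL a" and a: "a \<in> LPL n k" by auto
      obtain D P S i0 j0 where aa: "a = (((D,P),S),(i0,j0))" by (rule split5)
      have X: "((D,P),S) \<in> NS n k" and c: "(i0,j0) \<in> S" and l: "\<exists>j'<j0. (i0,j') \<in> P"
        using a unfolding aa LPL_def by auto
      have T: "tree_like_tableau D P" and cP: "card P = n" and So: "S \<subseteq> occ D P" using X unfolding NS_iff by auto
      have cP': "(i0,j0) \<in> P" using c So unfolding occ_def by auto
      have nr: "(i0,j0) \<noteq> (0,0)" using l by auto
      have "\<not> (\<exists>i'<i0. (i',j0) \<in> P)" using tlt_pt[OF T cP' nr] l by simp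
      then have "\<not> (\<exists>j'<i0. (j0,j') \<in> trp P)" by simp
      then show "b \<in> LPU n k" unfolding b aa tauL_def LPU_def using NS_trp[OF X] c by simp
    qed
  qed
qed

lemma card_RPR: "card (RPR m k) = card (RPL m k)"
proof (rule bij_betw_same_card[of tauR])
  show "bij_betw tauR (RPR m k) (RPL m k)"
  proof (rule bij_betw_byWitness[where f'=tauR])
    show "\<forall>a\<in>RPR m k. tauR (tauR a) = a" by (auto simp: tauR_def RPR_def)
    show "\<forall>a\<in>RPL m k. tauR (tauR a) = a" by (auto simp: tauR_def RPL_def)
    show "tauR ` RPR m k \<subseteq> RPL m k"
    proof
      fix b assume "b \<in> tauR ` RPR m k"
      then obtain a where b: "b = tauR a" and a: "a \<in> RPR m k" by auto
      obtain D P S e where aa: "a = (((D,P),S),e)" by (rule split4)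
      have X: "((D,P),S) \<in> NS m k" and e: "\<exists>j. e = Inr j \<and> j \<in> colsD D \<and> j \<notin> snd ` S"
        using a unfolding aa RPR_def by auto
      then show "b \<in> RPL m k" unfolding b aa tauR_def RPL_def using NS_trp[OF X]
        by (auto simp: rowsD_trp fst_trp)
    qed
    show "tauR ` RPL m k \<subseteq> RPR m k"
    proof
      fix b assume "b \<in> tauR ` RPL m k"
      then obtain a where b: "b = tauR a" and a: "a \<in> RPL m k" by auto
      obtain D P S e where aa: "a = (((D,P),S),e)" by (rule split4)
      have X: "((D,P),S) \<in> NS m k" and e: "\<exists>i. e = Inl i \<and> i \<in> rowsD D \<and> i \<notin> fst ` S"
        using a unfolding aa RPL_def by auto
      then show "b \<in> RPR m k" unfolding b aa tauR_def RPR_def using NS_trp[OF X]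
        by (auto simp: colsD_trp snd_trp)
    qed
  qed
qed


lemma split3:
  obtains D P S where "x = ((D,P),S)"
proof -
  obtain DP S where a2: "x = (DP,S)" by (cases x)
  obtain D P where a3: "DP = (D,P)" by (cases DP)
  show thesis using that a2 a3 by blast
qed

lemma NS_sub: "NS n k \<subseteq> tlts n \<times> Pow ({..<n} \<times> {..<n})"
proof
  fix x assume x: "x \<in> NS n k"
  obtain D P S where xx: "x = ((D,P),S)" by (rule split3)
  have T: "tree_like_tableau D P" and c: "card P = n" and So: "S \<subseteq> occ D P" using x unfolding xx NS_iff by auto
  have "S \<subseteq> D" using So tlt_sub[OF T] unfolding occ_def by auto
  then have "S \<subseteq> {..<n} \<times> {..<n}" using tlt_box[OF T] c by auto
  then show "x \<in> tlts n \<times> Pow ({..<n} \<times> {..<n})" using x unfolding xx NS_def by auto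
qed

lemma finite_NS: "finite (NS n k)"
  by (rule finite_subset[OF NS_sub]) (simp add: finite_tlts)

definition edges :: "(nat \<times> nat) set \<Rightarrow> (nat + nat) set" where
  "edges D = Inl ` rowsD D \<union> Inr ` colsD D"
definition blocked :: "(nat \<times> nat) set \<Rightarrow> (nat + nat) set" where
  "blocked S = Inl ` fst ` S \<union> Inr ` snd ` S"

lemma card_free_edges:
  assumes X: "((D,P),S) \<in> NS m k"
  shows "card (edges D - blocked S) = m + 1 - 2 * k"
proof -
  have T: "tree_like_tableau D P" and c: "card P = m" and So: "S \<subseteq> occ D P" and cS: "card S = k"
    using X unfolding NS_iff by auto
  have F: "ferrers D" using tlt_ferrers[OF T] .
  have SD: "S \<subseteq> D" using So tlt_sub[OF T] unfolding occ_def by auto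
  have finS: "finite S" using finite_subset[OF SD tlt_finD[OF T]] .
  have sub: "blocked S \<subseteq> edges D"
  proof
    fix e assume "e \<in> blocked S"
    then consider i j where "(i,j) \<in> S" "e = Inl i" | i j where "(i,j) \<in> S" "e = Inr j"
      unfolding blocked_def by force
    then show "e \<in> edges D"
    proof cases
      case 1
      then have "(i,0) \<in> D" using SD ferrers_down[OF F, of i j i 0] by auto
      then show ?thesis using 1 unfolding edges_def rowsD_def by auto
    next
      case 2
      then have "(0,j) \<in> D" using SD ferrers_down[OF F, of i j 0 j] by auto
      then show ?thesis using 2 unfolding edges_def colsD_def by auto
    qed
  qed
  have ce: "card (edges D) = m + 1"
  proof -
    have "card (edges D) = card (Inl ` rowsD D :: (nat + nat) set) + card (Inr ` colsD D :: (nat + nat) set)"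
      unfolding edges_def by (rule card_Un_disjoint) (auto intro: rowsD_fin[OF T] colsD_fin[OF T])
    also have "\<dots> = card (rowsD D) + card (colsD D)" by (simp add: card_image)
    finally show ?thesis using rows_cols_card[OF T] c by simp
  qed
  have corn: "\<And>p. p \<in> S \<Longrightarrow> is_corner D p" using So unfolding occ_def by auto
  have inj1: "inj_on fst S"
  proof (rule inj_onI)
    fix p q assume p: "p \<in> S" and q: "q \<in> S" and e: "fst p = fst q"
    obtain i j where pij: "p = (i,j)" by (cases p)
    obtain j' where qij: "q = (i,j')" using e pij by (cases q) auto
    have "j = j'" using corner_same_row[OF F] corn[OF p] corn[OF q] pij qij by simp
    then show "p = q" using pij qij by simp
  qed
  have inj2: "inj_on snd S"
  proof (rule inj_onI)
    fix p q assume p: "p \<in> S" and q: "q \<in> S" and e: "snd p = snd q"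
    obtain i j where pij: "p = (i,j)" by (cases p)
    obtain i' where qij: "q = (i',j)" using e pij by (cases q) auto
    have "i = i'" using corner_same_col[OF F] corn[OF p] corn[OF q] pij qij by simp
    then show "p = q" using pij qij by simp
  qed
  have cb: "card (blocked S) = 2 * k"
  proof -
    have "card (blocked S) = card (Inl ` fst ` S :: (nat + nat) set) + card (Inr ` snd ` S :: (nat + nat) set)"
      unfolding blocked_def by (rule card_Un_disjoint) (auto intro: finS)
    also have "\<dots> = card (fst ` S) + card (snd ` S)" by (simp add: card_image)
    also have "\<dots> = k + k" using card_image[OF inj1] card_image[OF inj2] cS by simp
    finally show ?thesis by simp
  qed
  have "finite (edges D)" unfolding edges_def using rowsD_fin[OF T] colsD_fin[OF T] by simp
  then show ?thesis using card_Diff_subset[OF finite_subset[OF sub] sub] ce cb by simp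
qed

lemma LP_split: "Sigma (NS n k) snd = LPL n k \<union> LPU n k"
  unfolding LPL_def LPU_def by auto

lemma RP_split: "Sigma (NS m k) (\<lambda>X. edges (fst (fst X)) - blocked (snd X)) = RPL m k \<union> RPR m k"
  unfolding RPL_def RPR_def edges_def blocked_def by force

lemma fin_snd_NS: "\<forall>X\<in>NS n k. finite (snd X)"
proof
  fix X assume X: "X \<in> NS n k"
  obtain D P S where xx: "X = ((D,P),S)" by (rule split3)
  have T: "tree_like_tableau D P" and So: "S \<subseteq> occ D P" using X unfolding xx NS_iff by auto
  have "S \<subseteq> P" using So unfolding occ_def by auto
  then show "finite (snd X)" using tlt_finP[OF T] xx finite_subset by auto
qed

lemma finite_LP: "finite (Sigma (NS n k) snd)"
  using finite_SigmaI[OF finite_NS] fin_snd_NS by blast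

lemma card_LP: "card (Sigma (NS n k) snd) = k * card (NS n k)"
proof -
  have fin: "\<forall>X\<in>NS n k. finite (snd X)"
  proof
    fix X assume X: "X \<in> NS n k"
    obtain D P S where xx: "X = ((D,P),S)" by (rule split3)
    have T: "tree_like_tableau D P" and So: "S \<subseteq> occ D P" using X unfolding xx NS_iff by auto
    have "S \<subseteq> P" using So unfolding occ_def by auto
    then show "finite (snd X)" using tlt_finP[OF T] xx finite_subset by auto
  qed
  have "card (Sigma (NS n k) snd) = (\<Sum>X\<in>NS n k. card (snd X))"
    using card_SigmaI[OF finite_NS fin] .
  also have "\<dots> = (\<Sum>X\<in>NS n k. k)" by (rule sum.cong) (auto simp: NS_def)
  finally show ?thesis by simp
qed

lemma card_RP: "card (Sigma (NS m k) (\<lambda>X. edges (fst (fst X)) - blocked (snd X))) = card (NS m k) * (m + 1 - 2 * k)"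
proof -
  have fin: "\<forall>X\<in>NS m k. finite (edges (fst (fst X)) - blocked (snd X))"
  proof
    fix X assume X: "X \<in> NS m k"
    obtain D P S where xx: "X = ((D,P),S)" by (rule split3)
    have T: "tree_like_tableau D P" using X unfolding xx NS_iff by auto
    show "finite (edges (fst (fst X)) - blocked (snd X))"
      unfolding xx edges_def using rowsD_fin[OF T] colsD_fin[OF T] by simp
  qed
  have "card (Sigma (NS m k) (\<lambda>X. edges (fst (fst X)) - blocked (snd X))) =
        (\<Sum>X\<in>NS m k. card (edges (fst (fst X)) - blocked (snd X)))"
    using card_SigmaI[OF finite_NS fin] .
  also have "\<dots> = (\<Sum>X\<in>NS m k. m + 1 - 2 * k)"
  proof (rule sum.cong[OF refl])
    fix X assume X: "X \<in> NS m k"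
    obtain D P S where xx: "X = ((D,P),S)" by (rule split3)
    show "card (edges (fst (fst X)) - blocked (snd X)) = m + 1 - 2 * k"
      using card_free_edges X unfolding xx by simp
  qed
  finally show ?thesis by simp
qed

definition N :: "nat \<Rightarrow> nat \<Rightarrow> nat" where "N n k = card (NS n k)"

lemma N_rec:
  assumes n: "n \<ge> 2" and k: "k \<ge> 1"
  shows "k * N n k = N (n-1) (k-1) * (n - 2 * (k - 1))"
proof -
  have d1: "LPL n k \<inter> LPU n k = {}" unfolding LPL_def LPU_def by auto
  have d2: "RPL (n-1) (k-1) \<inter> RPR (n-1) (k-1) = {}" unfolding RPL_def RPR_def by auto
  have f1: "finite (LPL n k)" "finite (LPU n k)"
    using finite_LP[of n k] unfolding LP_split by auto
  have fin2: "finite (Sigma (NS (n-1) (k-1)) (\<lambda>X. edges (fst (fst X)) - blocked (snd X)))"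
  proof (rule finite_SigmaI[OF finite_NS])
    fix X assume X: "X \<in> NS (n-1) (k-1)"
    obtain D P S where xx: "X = ((D,P),S)" by (rule split3)
    have T: "tree_like_tableau D P" using X unfolding xx NS_iff by auto
    show "finite (edges (fst (fst X)) - blocked (snd X))"
      unfolding xx edges_def using rowsD_fin[OF T] colsD_fin[OF T] by simp
  qed
  have f2: "finite (RPL (n-1) (k-1))" "finite (RPR (n-1) (k-1))" using fin2 RP_split by auto
  have "k * N n k = card (LPL n k) + card (LPU n k)"
    using card_LP[of n k] LP_split[of n k] card_Un_disjoint[OF f1 d1] unfolding N_def by simp
  also have "\<dots> = 2 * card (LPL n k)" using card_LPU[OF n] by simp
  also have "\<dots> = 2 * card (RPL (n-1) (k-1))" using bij_betw_same_card[OF bij_L[OF n k]] by simp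
  also have "\<dots> = card (RPL (n-1) (k-1)) + card (RPR (n-1) (k-1))" using card_RPR by simp
  also have "\<dots> = card (Sigma (NS (n-1) (k-1)) (\<lambda>X. edges (fst (fst X)) - blocked (snd X)))"
    using RP_split card_Un_disjoint[OF f2 d2] by simp
  also have "\<dots> = N (n-1) (k-1) * (n - 1 + 1 - 2 * (k - 1))" unfolding N_def by (rule card_RP)
  finally show ?thesis using n by simp
qed


lemma N_0: "n \<ge> 1 \<Longrightarrow> N n 0 = fact n"
proof -
  assume n: "n \<ge> 1"
  have "NS n 0 = (\<lambda>T. (T, {}::(nat \<times> nat) set)) ` tlts n"
  proof (intro equalityI subsetI)
    fix x assume x: "x \<in> NS n 0"
    obtain D P S where xx: "x = ((D,P),S)" by (rule split3)
    have "finite S" using fin_snd_NS x xx by force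
    then have "S = {}" using x unfolding xx NS_iff by simp
    then show "x \<in> (\<lambda>T. (T, {}::(nat \<times> nat) set)) ` tlts n" using x unfolding xx NS_def by auto
  next
    fix x assume "x \<in> (\<lambda>T. (T, {}::(nat \<times> nat) set)) ` tlts n"
    then show "x \<in> NS n 0" unfolding NS_def by auto
  qed
  then have "N n 0 = card ((\<lambda>T. (T, {}::(nat \<times> nat) set)) ` tlts n)" unfolding N_def by simp
  also have "\<dots> = card (tlts n)" by (rule card_image) (auto simp: inj_on_def)
  finally show ?thesis using card_tlts[OF n] by simp
qed

lemma N_1: "N 1 k = fact (1 - k) * ((1 - k + 1) choose k)"
proof -
  define T0 where "T0 = ({(0::nat,0::nat)},{(0::nat,0::nat)})"
  have occ0: "occ {(0,0)} {(0,0)} = {(0::nat,0::nat)}" unfolding occ_def is_corner_def by auto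
  have "NS 1 k = {(T0, S) | S. S \<subseteq> {(0,0)} \<and> card S = k}"
    unfolding NS_def tlts_1 T0_def using occ0 by auto
  also have "\<dots> = (\<lambda>S. (T0,S)) ` {S. S \<subseteq> {(0,0)} \<and> card S = k}" by auto
  finally have e: "N 1 k = card {S. S \<subseteq> {(0::nat,0::nat)} \<and> card S = k}"
    unfolding N_def by (simp add: card_image inj_on_def)
  have "card {S. S \<subseteq> {(0::nat,0::nat)} \<and> card S = k} = card {(0::nat,0::nat)} choose k"
    by (rule n_subsets) simp
  then show ?thesis using e by (cases k) auto
qed

lemma key_identity:
  assumes n: "n \<ge> 2" and k: "k \<ge> 1"
  shows "k * (fact (n - k) * ((n - k + 1) choose k)) =
    fact ((n - 1) - (k - 1)) * (((n - 1) - (k - 1) + 1) choose (k - 1)) * (n - 2 * (k - 1))"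
proof (cases "k \<le> n")
  case True
  define M where "M = n - k + 1"
  have e1: "(n - 1) - (k - 1) = n - k" using True k by simp
  have a1: "k * (M choose k) = M * ((M - 1) choose (k - 1))"
    using times_binomial_minus1_eq[of k M] k by simp
  have a2: "(M - (k - 1)) * (M choose (k - 1)) = M * ((M - 1) choose (k - 1))"
    by (rule binomial_absorb_comp)
  have a3: "M - (k - 1) = n - 2 * (k - 1)" unfolding M_def using True k by arith
  have h: "k * (M choose k) = (n - 2 * (k - 1)) * (M choose (k - 1))" using a1 a2 a3 by simp
  have "k * (fact (n - k) * (M choose k)) = fact (n - k) * (k * (M choose k))" by (simp add: ac_simps)
  also have "\<dots> = fact (n - k) * ((n - 2 * (k - 1)) * (M choose (k - 1)))" using h by simp
  also have "\<dots> = fact (n - k) * (M choose (k - 1)) * (n - 2 * (k - 1))" by (simp add: ac_simps)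
  finally show ?thesis unfolding e1 M_def[symmetric] .
next
  case False
  then have z1: "n - k = 0" "(n - 1) - (k - 1) = 0" by auto
  have b1: "(1 choose k) = 0" using False n by (simp add: binomial_eq_0)
  have b2: "(1 choose (k - 1)) = 0" using False n by (simp add: binomial_eq_0)
  show ?thesis unfolding z1 using b1 b2 by (simp only: add_0 mult_0_right mult_0)
qed

lemma N_closed: "n \<ge> 1 \<Longrightarrow> N n k = fact (n - k) * ((n - k + 1) choose k)"
proof (induction n arbitrary: k rule: nat_induct_at_least)
  case base
  then show ?case using N_1 by simp
next
  case (Suc m)
  show ?case
  proof (cases "k = 0")
    case True then show ?thesis using N_0[of "Suc m"] by simp
  next
    case False
    then have k: "k \<ge> 1" by simp
    have n: "Suc m \<ge> 2" using Suc.hyps by simp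
    have "k * N (Suc m) k = N m (k - 1) * (Suc m - 2 * (k - 1))" using N_rec[OF n k] by simp
    also have "\<dots> = fact (m - (k - 1)) * ((m - (k - 1) + 1) choose (k - 1)) * (Suc m - 2 * (k - 1))"
      using Suc.IH[of "k - 1"] by simp
    also have "\<dots> = k * (fact (Suc m - k) * ((Suc m - k + 1) choose k))"
      using key_identity[OF n k] by simp
    finally show ?thesis using k by simp
  qed
qed

lemma sum_Pow_sign:
  assumes "finite A"
  shows "(\<Sum>S\<in>Pow A. (-1::int) ^ card S) = (if A = {} then 1 else 0)"
proof -
  have "(\<Prod>a\<in>A. (-1::int) + 1) = (\<Sum>X\<in>Pow A. (\<Prod>a\<in>X. -1) * (\<Prod>a\<in>A - X. 1))"
    by (rule prod_add) fact
  then have "(\<Sum>X\<in>Pow A. (-1::int) ^ card X) = 0 ^ card A" by simp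
  then show ?thesis using assms by (simp add: card_gt_0_iff)
qed

lemma IE:
  assumes n: "n \<ge> 1"
  shows "int (card (tlt_no_occ_corner n)) = (\<Sum>k\<in>{..n}. (-1) ^ k * int (N n k))"
proof -
  define AS where "AS = Sigma (tlts n) (\<lambda>T. Pow (occ (fst T) (snd T)))"
  have finT: "\<forall>T\<in>tlts n. finite (occ (fst T) (snd T))"
  proof
    fix T assume "T \<in> tlts n"
    then obtain D P where TT: "T = (D,P)" "tree_like_tableau D P" unfolding tlts_def by auto
    have "occ D P \<subseteq> P" unfolding occ_def by auto
    then have "finite (occ D P)" using tlt_finP[OF TT(2)] by (rule finite_subset)
    then show "finite (occ (fst T) (snd T))" using TT by simp
  qed
  have finAS: "finite AS" unfolding AS_def using finite_tlts finT by (intro finite_SigmaI) auto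
  have cardle: "\<forall>x\<in>AS. card (snd x) \<le> n"
  proof
    fix x assume x: "x \<in> AS"
    obtain D P S where xx: "x = ((D,P),S)" by (rule split3)
    have T: "tree_like_tableau D P" and c: "card P = n" and So: "S \<subseteq> occ D P"
      using x unfolding xx AS_def tlts_def by auto
    have "S \<subseteq> P" using So unfolding occ_def by auto
    then show "card (snd x) \<le> n" using card_mono[OF tlt_finP[OF T]] c xx by simp
  qed
  have NSeq: "\<And>k. NS n k = {x \<in> AS. card (snd x) = k}"
    unfolding NS_def AS_def by auto
  have "(\<Sum>x\<in>AS. (-1::int) ^ card (snd x)) = (\<Sum>k\<in>{..n}. \<Sum>x\<in>{x\<in>AS. card (snd x) = k}. (-1) ^ card (snd x))"
    by (rule sum.group[symmetric]) (use finAS cardle in auto)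
  also have "\<dots> = (\<Sum>k\<in>{..n}. (-1) ^ k * int (N n k))"
  proof (rule sum.cong[OF refl])
    fix k
    have "(\<Sum>x\<in>{x\<in>AS. card (snd x) = k}. (-1::int) ^ card (snd x)) = (\<Sum>x\<in>NS n k. (-1) ^ k)"
      unfolding NSeq by (rule sum.cong) auto
    then show "(\<Sum>x\<in>{x\<in>AS. card (snd x) = k}. (-1::int) ^ card (snd x)) = (-1) ^ k * int (N n k)"
      unfolding N_def by simp
  qed
  finally have s1: "(\<Sum>x\<in>AS. (-1::int) ^ card (snd x)) = (\<Sum>k\<in>{..n}. (-1) ^ k * int (N n k))" .
  have "(\<Sum>x\<in>AS. (-1::int) ^ card (snd x)) = (\<Sum>T\<in>tlts n. \<Sum>S\<in>Pow (occ (fst T) (snd T)). (-1) ^ card S)"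
    unfolding AS_def by (subst sum.Sigma) (use finite_tlts finT in \<open>auto simp: split_def\<close>)
  also have "\<dots> = (\<Sum>T\<in>tlts n. if occ (fst T) (snd T) = {} then 1 else 0)"
  proof (rule sum.cong[OF refl])
    fix T assume "T \<in> tlts n"
    then have "finite (occ (fst T) (snd T))" using finT by blast
    then show "(\<Sum>S\<in>Pow (occ (fst T) (snd T)). (-1::int) ^ card S) = (if occ (fst T) (snd T) = {} then 1 else 0)"
      by (rule sum_Pow_sign)
  qed
  also have "\<dots> = int (card (tlts n \<inter> {T. occ (fst T) (snd T) = {}}))"
    using finite_tlts[of n] by (simp add: sum.If_cases)
  also have "tlts n \<inter> {T. occ (fst T) (snd T) = {}} = tlt_no_occ_corner n"
    unfolding tlt_no_occ_corner_def tlts_def has_occupied_corner_def occ_def by auto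
  finally show ?thesis using s1 by simp
qed


theorem mainTheorem17:
  fixes n :: nat
  assumes "n \<ge> 1"
  shows "int (card (tlt_no_occ_corner n)) =
    (\<Sum>k = nat \<lceil>(real n - 1) / 2\<rceil>..n. int ((k + 1) choose (n - k)) * (-1) ^ (n - k) * int (fact k))"
proof -
  define m where "m = nat \<lceil>(real n - 1) / 2\<rceil>"
  define g where "g = (\<lambda>k. int ((k + 1) choose (n - k)) * (-1) ^ (n - k) * int (fact k))"
  have "int (card (tlt_no_occ_corner n)) = (\<Sum>k\<in>{..n}. (-1) ^ k * int (N n k))" using IE[OF assms] .
  also have "\<dots> = (\<Sum>k=0..n. (-1) ^ k * int (fact (n - k) * ((n - k + 1) choose k)))"
    using N_closed[OF assms] by (simp add: atMost_atLeast0)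
  also have "\<dots> = (\<Sum>k=0..n. (-1) ^ (n + 0 - k) * int (fact (n - (n + 0 - k)) * ((n - (n + 0 - k) + 1) choose (n + 0 - k))))"
    by (rule sum.atLeastAtMost_rev)
  also have "\<dots> = (\<Sum>k=0..n. g k)"
  proof (rule sum.cong[OF refl])
    fix k assume "k \<in> {0..n}"
    then have "n - (n + 0 - k) = k" by simp
    then show "(-1) ^ (n + 0 - k) * int (fact (n - (n + 0 - k)) * ((n - (n + 0 - k) + 1) choose (n + 0 - k))) = g k"
      unfolding g_def by (simp add: ac_simps)
  qed
  also have "\<dots> = (\<Sum>k=m..n. g k)"
  proof -
    have mn: "m \<le> n"
    proof -
      have "(real n - 1) / 2 \<le> real n" by simp
      then have "\<lceil>(real n - 1) / 2\<rceil> \<le> int n" by (simp add: ceiling_le_iff)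
      then show ?thesis unfolding m_def by simp
    qed
    have z: "g k = 0" if "k < m" for k
    proof -
      have "int k < \<lceil>(real n - 1) / 2\<rceil>" using that unfolding m_def by linarith
      then have "real k < (real n - 1) / 2" by (simp add: less_ceiling_iff)
      then have "real (2 * k + 1) < real n" by simp
      then have "2 * k + 1 < n" by linarith
      then have "k + 1 < n - k" by arith
      then show ?thesis unfolding g_def by (simp add: binomial_eq_0)
    qed
    have "{0..n} = {0..<m} \<union> {m..n}" using mn by auto
    then have "(\<Sum>k=0..n. g k) = (\<Sum>k\<in>{0..<m}. g k) + (\<Sum>k=m..n. g k)"
      by (simp add: sum.union_disjoint ivl_disj_int)
    also have "(\<Sum>k\<in>{0..<m}. g k) = 0" using z by simp
    finally show ?thesis by simp
  qed
  finally show ?thesis unfolding g_def m_def .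
qed


end
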